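(* For the twindragons $\mathcal B=T_{-1,1}$, $\mathcal C=T_{1,-1}$, $\mathcal D=T_{0,1}$: (a) $\mathcal C$ has exactly $20$ nonzero neighbors ($k\in\mathbb Z^3\setminus\{0\}$ with $B_k\ne\emptyset$), of which $12$ give faces and $8$ are point neighbors; (b) $\mathcal B$ has exactly $18$ nonzero neighbors, of which $14$ give faces and $4$ are point neighbors; (c) $\mathcal D$ has exactly $34$ nonzero neighbors, of which $14$ give faces, $12$ are point neighbors, and the remaining $8$ have boundary sets $B_k$ that are finite with more than one point.
   Context: For integers $a,b$ let $M_{a,b}=\begin{pmatrix}0&0&2\\1&0&b\\0&1&a\end{pmatrix}$, $e_1=(1,0,0)'$, $f_1(x)=M_{a,b}^{-1}(x-\tfrac12 e_1)$, $f_2(x)=M_{a,b}^{-1}(x+\tfrac12 e_1)$, and $T_{a,b}$ the compact set with $T_{a,b}=f_1(T_{a,b})\cup f_2(T_{a,b})$ (a twindragon; $T_{a,b}+\mathbb Z^3$ tiles $\mathbb R^3$ for the parameters considered). For $T=T_{a,b}$ and $k\in\mathbb Z^3$, $B_k=T\cap(T+k)$. A point neighbor is $k\ne0$ with $B_k$ a single point. $B_k$ ($k\neq 0$) is a face of $T$ if there are $x\in B_k$ and an open neighborhood $U$ of $x$ in $\mathbb R^3$ with $U\cap\partial T\subseteq B_k$ and $U\subseteq T\cup(T+k)$. *)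

theory Defs
  imports "HOL-Analysis.Analysis"
begin

definition Mab :: "int \<Rightarrow> int \<Rightarrow> real^3^3" where
  "Mab a b = vector [vector [0, 0, 2], vector [1, 0, real_of_int b], vector [0, 1, real_of_int a]]"

definition e1 :: "real^3" where
  "e1 = axis 1 1"

definition f1 :: "int \<Rightarrow> int \<Rightarrow> real^3 \<Rightarrow> real^3" where
  "f1 a b x = matrix_inv (Mab a b) *v (x - (1/2) *\<^sub>R e1)"

definition f2 :: "int \<Rightarrow> int \<Rightarrow> real^3 \<Rightarrow> real^3" where
  "f2 a b x = matrix_inv (Mab a b) *v (x + (1/2) *\<^sub>R e1)"

definition twindragon :: "int \<Rightarrow> int \<Rightarrow> (real^3) set" where
  "twindragon a b = (THE T. compact T \<and> T \<noteq> {} \<and> T = f1 a b ` T \<union> f2 a b ` T)"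

definition lattice3 :: "(real^3) set" where
  "lattice3 = {k. \<forall>i. k $ i \<in> \<int>}"

definition Bset :: "(real^3) set \<Rightarrow> real^3 \<Rightarrow> (real^3) set" where
  "Bset T k = T \<inter> ((\<lambda>x. x + k) ` T)"

definition neighbors :: "(real^3) set \<Rightarrow> (real^3) set" where
  "neighbors T = {k \<in> lattice3. k \<noteq> 0 \<and> Bset T k \<noteq> {}}"

definition point_neighbor :: "(real^3) set \<Rightarrow> real^3 \<Rightarrow> bool" where
  "point_neighbor T k \<longleftrightarrow> k \<noteq> 0 \<and> (\<exists>x. Bset T k = {x})"

definition is_face :: "(real^3) set \<Rightarrow> real^3 \<Rightarrow> bool" where
  "is_face T k \<longleftrightarrow> k \<noteq> 0 \<and> (\<exists>x \<in> Bset T k. \<exists>U. open U \<and> x \<in> U \<and>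
      U \<inter> frontier T \<subseteq> Bset T k \<and> U \<subseteq> T \<union> ((\<lambda>y. y + k) ` T))"

end

theory Submission
  imports Defs
begin

definition vec3 :: "real \<Rightarrow> real \<Rightarrow> real \<Rightarrow> real^3" where
  "vec3 x y z = vector [x,y,z]"

lemma vec3_nth[simp]: "vec3 x y z $ 1 = x" "vec3 x y z $ 2 = y" "vec3 x y z $ 3 = z"
  by (simp_all add: vec3_def)

lemma vec3_eta: "v = vec3 (v$1) (v$2) (v$3)"
  by (simp add: vec_eq_iff forall_3)

lemma vec3_eq_iff[simp]: "vec3 x y z = vec3 x' y' z' \<longleftrightarrow> x = x' \<and> y = y' \<and> z = z'"
  by (auto simp: vec_eq_iff forall_3)

lemma vec3_add[simp]: "vec3 x y z + vec3 x' y' z' = vec3 (x+x') (y+y') (z+z')"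
  by (simp add: vec_eq_iff forall_3)
lemma vec3_diff[simp]: "vec3 x y z - vec3 x' y' z' = vec3 (x-x') (y-y') (z-z')"
  by (simp add: vec_eq_iff forall_3)
lemma vec3_uminus[simp]: "- vec3 x y z = vec3 (-x) (-y) (-z)"
  by (simp add: vec_eq_iff forall_3)
lemma vec3_scale[simp]: "c *\<^sub>R vec3 x y z = vec3 (c*x) (c*y) (c*z)"
  by (simp add: vec_eq_iff forall_3)
lemma vec3_zero: "(0::real^3) = vec3 0 0 0"
  by (simp add: vec_eq_iff forall_3)
lemma e1_vec3: "e1 = vec3 1 0 0"
  by (simp add: vec_eq_iff forall_3 e1_def axis_def)

lemma Mab_mult: "Mab a b *v vec3 x y z = vec3 (2*z) (x + of_int b*z) (y + of_int a*z)"
  by (simp add: Mab_def vec_eq_iff forall_3 matrix_vector_mult_def sum_3)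

definition Ninv :: "int \<Rightarrow> int \<Rightarrow> real^3^3" where
  "Ninv a b = vector [vector [- of_int b/2, 1, 0], vector [- of_int a/2, 0, 1], vector [1/2, 0, 0]]"

lemma Mab_Ninv: "Mab a b ** Ninv a b = mat 1" "Ninv a b ** Mab a b = mat 1"
  by (simp_all add: Mab_def Ninv_def vec_eq_iff forall_3 matrix_matrix_mult_def sum_3 mat_def)

lemma matrix_inv_Mab: "matrix_inv (Mab a b) = Ninv a b"
proof -
  have U: "\<And>A'. Mab a b ** A' = mat 1 \<and> A' ** Mab a b = mat 1 \<Longrightarrow> A' = Ninv a b"
  proof -
    fix A' assume h: "Mab a b ** A' = mat 1 \<and> A' ** Mab a b = mat 1"
    have "A' = A' ** (Mab a b ** Ninv a b)" by (simp add: Mab_Ninv)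
    also have "\<dots> = (A' ** Mab a b) ** Ninv a b" by (simp add: matrix_mul_assoc)
    also have "\<dots> = Ninv a b" using h by simp
    finally show "A' = Ninv a b" .
  qed
  show ?thesis unfolding matrix_inv_def
    by (rule some_equality) (use Mab_Ninv U in auto)
qed

lemma Ninv_mult: "matrix_inv (Mab a b) *v vec3 x y z = vec3 (y - of_int b*x/2) (z - of_int a*x/2) (x/2)"
  by (simp add: matrix_inv_Mab Ninv_def vec_eq_iff forall_3 matrix_vector_mult_def sum_3)

definition nI :: "real^3 \<Rightarrow> real" where "nI x = \<bar>x$1\<bar> + \<bar>x$2\<bar> + \<bar>x$3\<bar>"
definition Lm :: "int \<Rightarrow> int \<Rightarrow> real^3 \<Rightarrow> real^3" where "Lm a b x = matrix_inv (Mab a b) *v x"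
definition Mm :: "int \<Rightarrow> int \<Rightarrow> real^3 \<Rightarrow> real^3" where "Mm a b x = Mab a b *v x"
definition hv :: "real^3" where "hv = vec3 (1/2) 0 0"

lemma hv_e1: "(1/2) *\<^sub>R e1 = hv" by (simp add: e1_vec3 hv_def)

lemma f1_Lm: "f1 a b x = Lm a b (x - hv)" by (simp add: f1_def Lm_def hv_e1)
lemma f2_Lm: "f2 a b x = Lm a b (x + hv)" by (simp add: f2_def Lm_def hv_e1)

lemma Lm_vec3: "Lm a b (vec3 x y z) = vec3 (y - of_int b*x/2) (z - of_int a*x/2) (x/2)"
  by (simp add: Lm_def Ninv_mult)
lemma Mm_vec3: "Mm a b (vec3 x y z) = vec3 (2*z) (x + of_int b*z) (y + of_int a*z)"
  by (simp add: Mm_def Mab_mult)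

lemma Lm_Mm[simp]: "Lm a b (Mm a b x) = x"
  by (subst (1 2) vec3_eta[of x]) (simp add: Lm_vec3 Mm_vec3 del: vec3_nth)
lemma Mm_Lm[simp]: "Mm a b (Lm a b x) = x"
  by (subst (1 2) vec3_eta[of x]) (simp add: Lm_vec3 Mm_vec3 del: vec3_nth)

lemma Lm_add: "Lm a b (x + y) = Lm a b x + Lm a b y"
  by (simp add: Lm_def matrix_vector_right_distrib)
lemma Lm_diff: "Lm a b (x - y) = Lm a b x - Lm a b y"
  by (simp add: Lm_def matrix_vector_mult_diff_distrib)
lemma Mm_add: "Mm a b (x + y) = Mm a b x + Mm a b y"
  by (simp add: Mm_def matrix_vector_right_distrib)
lemma Mm_diff: "Mm a b (x - y) = Mm a b x - Mm a b y"
  by (simp add: Mm_def matrix_vector_mult_diff_distrib)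
lemma Lm_zero[simp]: "Lm a b 0 = 0" by (simp add: Lm_def)
lemma Lm_scale: "Lm a b (c *\<^sub>R x) = c *\<^sub>R Lm a b x"
  by (simp add: Lm_def matrix_vector_mult_scaleR)

lemma Lm_pow_diff: "(Lm a b ^^ n) (x - y) = (Lm a b ^^ n) x - (Lm a b ^^ n) y"
  by (induction n) (auto simp: Lm_diff)
lemma Lm_pow_add: "(Lm a b ^^ n) (x + y) = (Lm a b ^^ n) x + (Lm a b ^^ n) y"
  by (induction n) (auto simp: Lm_add)
lemma Lm_pow_scale: "(Lm a b ^^ n) (c *\<^sub>R x) = c *\<^sub>R (Lm a b ^^ n) x"
  by (induction n) (auto simp: Lm_scale)
lemma Mm_Lm_pow[simp]: "(Mm a b ^^ n) ((Lm a b ^^ n) x) = x"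
proof (induction n arbitrary: x)
  case (Suc n)
  have "(Mm a b ^^ Suc n) ((Lm a b ^^ Suc n) x) = (Mm a b ^^ n) (Mm a b (Lm a b ((Lm a b ^^ n) x)))"
    by (simp only: funpow_Suc_right[of n "Mm a b"] funpow.simps(2)[of n "Lm a b"] o_apply)
  then show ?case using Suc by simp
qed simp

lemma Lm_pow_inj: "(Lm a b ^^ n) x = (Lm a b ^^ n) y \<Longrightarrow> x = y"
  by (metis Mm_Lm_pow)

lemma nI_nonneg: "0 \<le> nI x" by (simp add: nI_def)
lemma nI_triangle: "nI (x + y) \<le> nI x + nI y" by (simp add: nI_def abs_triangle_ineq add_mono)
lemma nI_minus: "nI (- x) = nI x" by (simp add: nI_def)
lemma nI_diff_triangle: "nI (x - y) \<le> nI x + nI y"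
  using nI_triangle[of x "-y"] by (simp add: nI_minus)
lemma nI_diff_sym: "nI (x - y) = nI (y - x)"
  by (metis minus_diff_eq nI_minus)
lemma nI_scale: "nI (c *\<^sub>R x) = \<bar>c\<bar> * nI x" by (simp add: nI_def abs_mult algebra_simps)
lemma norm_le_nI: "norm x \<le> nI x"
  using norm_le_l1_cart[of x] by (simp add: nI_def sum_3)
lemma nI_le_norm: "nI x \<le> 3 * norm x"
  using component_le_norm_cart[of x 1] component_le_norm_cart[of x 2] component_le_norm_cart[of x 3]
  by (simp add: nI_def)
lemma nI_zero_iff: "nI x = 0 \<longleftrightarrow> x = 0"
proof
  assume "nI x = 0" then have "norm x \<le> 0" using norm_le_nI[of x] by simp
  then show "x = 0" by simp
qed (simp add: nI_def)

lemma abs_lin_bound: "\<bar>v - c * u / 2\<bar> \<le> \<bar>v\<bar> + \<bar>c\<bar> * \<bar>u\<bar>" for v c u :: real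
proof -
  have "\<bar>v - c * u / 2\<bar> \<le> \<bar>v\<bar> + \<bar>c * u / 2\<bar>" by (rule abs_triangle_ineq4)
  also have "\<bar>c * u / 2\<bar> = \<bar>c\<bar> * \<bar>u\<bar> / 2" by (simp add: abs_mult)
  also have "\<dots> \<le> \<bar>c\<bar> * \<bar>u\<bar>" by simp
  finally show ?thesis by simp
qed

lemma nI_Lm: "nI (Lm a b x) \<le> (1 + \<bar>of_int a\<bar> + \<bar>of_int b\<bar>) * nI x"
proof -
  obtain u v w where x: "x = vec3 u v w" by (metis vec3_eta)
  have 1: "\<bar>v - of_int b * u / 2\<bar> \<le> \<bar>v\<bar> + \<bar>of_int b\<bar> * \<bar>u\<bar>" by (rule abs_lin_bound)
  have 2: "\<bar>w - of_int a * u / 2\<bar> \<le> \<bar>w\<bar> + \<bar>of_int a\<bar> * \<bar>u\<bar>" by (rule abs_lin_bound)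
  have 3: "\<bar>of_int a\<bar> * \<bar>u\<bar> \<le> \<bar>of_int a\<bar> * (\<bar>u\<bar> + \<bar>v\<bar> + \<bar>w\<bar>)"
    by (simp add: mult_left_mono)
  have 4: "\<bar>of_int b\<bar> * \<bar>u\<bar> \<le> \<bar>of_int b\<bar> * (\<bar>u\<bar> + \<bar>v\<bar> + \<bar>w\<bar>)"
    by (simp add: mult_left_mono)
  have "nI (Lm a b x) = \<bar>v - of_int b * u / 2\<bar> + \<bar>w - of_int a * u / 2\<bar> + \<bar>u\<bar>/2"
    unfolding x by (simp add: Lm_vec3 nI_def)
  also have "\<dots> \<le> (1 + \<bar>of_int a\<bar> + \<bar>of_int b\<bar>) * nI x"
    using 1 2 unfolding x
    by (simp add: nI_def algebra_simps)
      (insert mult_nonneg_nonneg[OF abs_ge_zero[of v] abs_ge_zero[of "of_int a"]]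
         mult_nonneg_nonneg[OF abs_ge_zero[of v] abs_ge_zero[of "of_int b"]]
         mult_nonneg_nonneg[OF abs_ge_zero[of w] abs_ge_zero[of "of_int a"]]
         mult_nonneg_nonneg[OF abs_ge_zero[of w] abs_ge_zero[of "of_int b"]], linarith)
  finally show ?thesis .
qed

definition Fm :: "int \<Rightarrow> int \<Rightarrow> (real^3) set \<Rightarrow> (real^3) set" where
  "Fm a b S = f1 a b ` S \<union> f2 a b ` S"

definition stp :: "int \<Rightarrow> int \<Rightarrow> real^3 \<Rightarrow> real^3 \<Rightarrow> bool" where
  "stp a b x y \<longleftrightarrow> y = Mm a b x + hv \<or> y = Mm a b x - hv"

definition Orb :: "int \<Rightarrow> int \<Rightarrow> (real^3) set" where
  "Orb a b = {x. \<exists>y B. y 0 = x \<and> (\<forall>j. stp a b (y j) (y (Suc j))) \<and> (\<forall>j. nI (y j) \<le> B)}"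

lemma Lm_Mm_pow[simp]: "(Lm a b ^^ n) ((Mm a b ^^ n) x) = x"
proof (induction n arbitrary: x)
  case (Suc n)
  have "(Lm a b ^^ Suc n) ((Mm a b ^^ Suc n) x) = (Lm a b ^^ n) (Lm a b (Mm a b ((Mm a b ^^ n) x)))"
    by (simp only: funpow_Suc_right[of n "Lm a b"] funpow.simps(2)[of n "Mm a b"] o_apply)
  then show ?case using Suc by simp
qed simp

lemma Fm_mono: "S \<subseteq> S' \<Longrightarrow> Fm a b S \<subseteq> Fm a b S'"
  by (auto simp: Fm_def)

lemma continuous_Lm: "continuous_on S (Lm a b)"
proof -
  have "linear (Lm a b)" unfolding Lm_def by simp
  then have "bounded_linear (Lm a b)" by (simp add: linear_conv_bounded_linear)
  then show ?thesis by (rule linear_continuous_on)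
qed

lemma continuous_f1: "continuous_on S (f1 a b)"
proof -
  have "f1 a b = Lm a b \<circ> (\<lambda>x. x - hv)" by (auto simp: f1_Lm)
  then show ?thesis by (simp only:) (intro continuous_on_compose continuous_intros continuous_Lm)
qed
lemma continuous_f2: "continuous_on S (f2 a b)"
proof -
  have "f2 a b = Lm a b \<circ> (\<lambda>x. x + hv)" by (auto simp: f2_Lm)
  then show ?thesis by (simp only:) (intro continuous_on_compose continuous_intros continuous_Lm)
qed

lemma compact_Fm: "compact S \<Longrightarrow> compact (Fm a b S)"
  unfolding Fm_def by (intro compact_Un compact_continuous_image continuous_f1 continuous_f2)

lemma stp_f1: "stp a b (f1 a b z) z" by (simp add: stp_def f1_Lm Mm_diff)
lemma stp_f2: "stp a b (f2 a b z) z" by (simp add: stp_def f2_Lm Mm_add)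

lemma stp_back: "stp a b x y \<Longrightarrow> x = f1 a b y \<or> x = f2 a b y"
  unfolding stp_def f1_Lm f2_Lm by (metis Lm_Mm add_diff_cancel diff_add_cancel)

lemma Fm_stp: "x \<in> Fm a b S \<Longrightarrow> \<exists>y\<in>S. stp a b x y"
  unfolding Fm_def using stp_f1 stp_f2 by blast

locale twd =
  fixes a b :: int and p :: nat and P :: "(real^3) set"
  assumes p_pos: "0 < p"
    and contr: "\<And>x. nI ((Lm a b ^^ p) x) \<le> nI x / 2"
    and P_compact: "compact P" and P_ne: "P \<noteq> {}" and P_inv: "Fm a b P \<subseteq> P"
begin

abbreviation "L \<equiv> Lm a b"
definition "KL = (1 + \<bar>of_int a\<bar> + \<bar>of_int b\<bar> :: real)"
definition "CC = (\<Sum>j<p. KL^j)"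
definition "NN x = (\<Sum>j<p. nI ((L^^j) x))"
definition "rr = 1 - 1/(2*CC)"

lemma KL_ge1: "1 \<le> KL" by (simp add: KL_def)

lemma CC_ge1: "1 \<le> CC"
proof -
  have "CC = KL^0 + (\<Sum>j\<in>{..<p}-{0}. KL^j)" unfolding CC_def
    using p_pos by (subst sum.remove[of _ 0]) auto
  moreover have "0 \<le> (\<Sum>j\<in>{..<p}-{0}. KL^j)" using KL_ge1 by (intro sum_nonneg) simp
  ultimately show ?thesis by simp
qed

lemma nI_Lpow: "nI ((L^^j) x) \<le> KL^j * nI x"
proof (induction j)
  case (Suc j)
  have "nI ((L^^Suc j) x) = nI (L ((L^^j) x))" by simp
  also have "\<dots> \<le> KL * nI ((L^^j) x)" using nI_Lm unfolding KL_def by blast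
  also have "\<dots> \<le> KL * (KL^j * nI x)" using Suc KL_ge1 by (intro mult_left_mono) auto
  finally show ?case by simp
qed simp

lemma NN_nonneg: "0 \<le> NN x" unfolding NN_def by (intro sum_nonneg) (simp add: nI_nonneg)

lemma NN_le: "NN x \<le> CC * nI x"
proof -
  have "NN x \<le> (\<Sum>j<p. KL^j * nI x)" unfolding NN_def by (intro sum_mono nI_Lpow)
  also have "\<dots> = CC * nI x" unfolding CC_def by (simp add: sum_distrib_right)
  finally show ?thesis .
qed

lemma nI_le_NN: "nI x \<le> NN x"
proof -
  have "NN x = nI ((L^^0) x) + (\<Sum>j\<in>{..<p}-{0}. nI ((L^^j) x))" unfolding NN_def
    using p_pos by (subst sum.remove[of _ 0]) auto
  moreover have "0 \<le> (\<Sum>j\<in>{..<p}-{0}. nI ((L^^j) x))" by (intro sum_nonneg) (simp add: nI_nonneg)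
  ultimately show ?thesis by simp
qed

lemma rr_bounds: "0 \<le> rr" "rr < 1"
  using CC_ge1 by (auto simp: rr_def field_simps)

lemma NN_L: "NN (L x) \<le> rr * NN x"
proof -
  have "NN (L x) = (\<Sum>j<p. nI ((L^^Suc j) x))" unfolding NN_def by (simp add: funpow_swap1)
  also have "\<dots> = (\<Sum>j<Suc p. nI ((L^^j) x)) - nI x"
    by (subst sum.lessThan_Suc_shift) simp
  also have "\<dots> = NN x + nI ((L^^p) x) - nI x" unfolding NN_def by simp
  also have "\<dots> \<le> NN x - nI x / 2" using contr[of x] by simp
  also have "\<dots> \<le> NN x - NN x / (2*CC)"
  proof -
    have "NN x / CC \<le> nI x" using NN_le[of x] CC_ge1 by (simp add: divide_le_eq mult.commute)
    then show ?thesis by simp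
  qed
  also have "\<dots> = rr * NN x" by (simp add: rr_def algebra_simps)
  finally show ?thesis .
qed

lemma NN_Lpow: "NN ((L^^n) x) \<le> rr^n * NN x"
proof (induction n)
  case (Suc n)
  have "NN ((L^^Suc n) x) = NN (L ((L^^n) x))" by simp
  also have "\<dots> \<le> rr * NN ((L^^n) x)" by (rule NN_L)
  also have "\<dots> \<le> rr * (rr^n * NN x)" using Suc rr_bounds by (intro mult_left_mono) auto
  finally show ?case by simp
qed simp

lemma nI_Lpow_contr: "nI ((L^^n) x) \<le> CC * rr^n * nI x"
proof -
  have "nI ((L^^n) x) \<le> NN ((L^^n) x)" by (rule nI_le_NN)
  also have "\<dots> \<le> rr^n * NN x" by (rule NN_Lpow)
  also have "\<dots> \<le> rr^n * (CC * nI x)" using NN_le rr_bounds by (intro mult_left_mono) auto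
  finally show ?thesis by (simp add: algebra_simps)
qed

lemma small_pow: assumes "0 \<le> B" "0 < e" shows "\<exists>n. CC * rr^n * B < e"
proof (cases "B = 0")
  case True then show ?thesis using assms by auto
next
  case False
  then have "0 < e / (CC * B)" using assms CC_ge1 by auto
  then obtain n where n: "rr^n < e / (CC * B)" using real_arch_pow_inv rr_bounds by blast
  then have "rr^n * (CC * B) < e" using False assms CC_ge1 by (simp add: pos_less_divide_eq)
  then show ?thesis by (auto simp: algebra_simps)
qed

lemma shrink_zero: assumes "\<And>n. nI ((Mm a b ^^ n) v) \<le> B" shows "v = 0"
proof (rule ccontr)
  assume "v \<noteq> 0"
  then have pos: "0 < nI v" using nI_zero_iff nI_nonneg by (metis less_eq_real_def)
  have B0: "0 \<le> B" using assms[of 0] nI_nonneg[of v] by simp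
  obtain n where n: "CC * rr^n * B < nI v" using small_pow[OF B0 pos] by blast
  have "nI v = nI ((L^^n) ((Mm a b ^^ n) v))" by simp
  also have "\<dots> \<le> CC * rr^n * nI ((Mm a b ^^ n) v)" by (rule nI_Lpow_contr)
  also have "\<dots> \<le> CC * rr^n * B" using assms[of n] CC_ge1 rr_bounds
    by (intro mult_left_mono) auto
  finally show False using n by simp
qed


lemma back_orb:
  assumes K: "Fm a b K \<subseteq> K" "k0 \<in> K" and st: "\<forall>j. stp a b (y j) (y (Suc j))"
  shows "\<exists>w\<in>K. y 0 - w = (L^^n) (y n - k0)"
  using st
proof (induction n arbitrary: y)
  case 0 then show ?case using K by auto
next
  case (Suc n)
  from Suc.prems have "\<forall>j. stp a b (y (Suc j)) (y (Suc (Suc j)))" by simp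
  from Suc.IH[OF this] obtain w' where w': "w' \<in> K" "y 1 - w' = (L^^n) (y (Suc n) - k0)" by auto
  from Suc.prems have s: "stp a b (y 0) (y 1)" by simp
  show ?case
  proof (cases "y 0 = f1 a b (y 1)")
    case True
    have "f1 a b w' \<in> K" using K w' by (auto simp: Fm_def)
    moreover have "y 0 - f1 a b w' = L (y 1 - w')" using True by (simp add: f1_Lm Lm_diff)
    ultimately show ?thesis using w' by (metis funpow.simps(2) o_apply)
  next
    case False
    then have F: "y 0 = f2 a b (y 1)" using stp_back[OF s] by auto
    have "f2 a b w' \<in> K" using K w' by (auto simp: Fm_def)
    moreover have "y 0 - f2 a b w' = L (y 1 - w')" using F by (simp add: f2_Lm Lm_add Lm_diff)
    ultimately show ?thesis using w' by (metis funpow.simps(2) o_apply)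
  qed
qed

lemma Orb_sub: assumes "closed K" "K \<noteq> {}" "Fm a b K \<subseteq> K" shows "Orb a b \<subseteq> K"
proof
  fix x assume "x \<in> Orb a b"
  then obtain y B where y: "y 0 = x" "\<forall>j. stp a b (y j) (y (Suc j))" "\<forall>j. nI (y j) \<le> B"
    unfolding Orb_def by blast
  obtain k0 where k0: "k0 \<in> K" using assms by auto
  have "x \<in> closure K"
    unfolding closure_approachable
  proof (intro allI impI)
    fix e :: real assume e: "0 < e"
    have "0 \<le> B" using y(3) nI_nonneg[of "y 0"] by (metis order_trans)
    then have B0: "0 \<le> B + nI k0" using nI_nonneg[of k0] by simp
    obtain n where n: "CC * rr^n * (B + nI k0) < e" using small_pow[OF B0 e] by blast
    obtain w where w: "w \<in> K" "y 0 - w = (L^^n) (y n - k0)" using back_orb[OF assms(3) k0 y(2)] by blast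
    have "dist w x = norm (y 0 - w)" using y(1) by (simp add: dist_norm norm_minus_commute)
    also have "\<dots> \<le> nI (y 0 - w)" by (rule norm_le_nI)
    also have "\<dots> \<le> CC * rr^n * nI (y n - k0)" unfolding w(2) by (rule nI_Lpow_contr)
    also have "\<dots> \<le> CC * rr^n * (B + nI k0)"
      using nI_diff_triangle[of "y n" k0] y(3) CC_ge1 rr_bounds
      by (intro mult_left_mono) (auto intro: order_trans)
    finally show "\<exists>w\<in>K. dist w x < e" using w(1) n by force
  qed
  then show "x \<in> K" using assms(1) by simp
qed

lemma sub_Orb: assumes "\<forall>x\<in>X. nI x \<le> B" "\<forall>x\<in>X. \<exists>y\<in>X. stp a b x y"
  shows "X \<subseteq> Orb a b"
proof
  fix x assume x: "x \<in> X"
  define y where "y = rec_nat x (\<lambda>_ z. SOME z'. z' \<in> X \<and> stp a b z z')"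
  have y0: "y 0 = x" by (simp add: y_def)
  have ys: "y (Suc j) = (SOME z'. z' \<in> X \<and> stp a b (y j) z')" for j by (simp add: y_def)
  have yX: "y j \<in> X" for j
  proof (induction j)
    case 0 then show ?case using x y0 by simp
  next
    case (Suc j) then show ?case unfolding ys using assms(2) by (metis (no_types, lifting) someI_ex)
  qed
  have "stp a b (y j) (y (Suc j))" for j
    unfolding ys using assms(2) yX[of j] by (metis (no_types, lifting) someI_ex)
  then show "x \<in> Orb a b" unfolding Orb_def using y0 yX assms(1) by blast
qed

definition "AA n = (Fm a b ^^ n) P"

lemma AA_compact: "compact (AA n)"
  by (induction n) (auto simp: AA_def P_compact compact_Fm)
lemma AA_ne: "AA n \<noteq> {}"
  by (induction n) (auto simp: AA_def P_ne Fm_def)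
lemma AA_dec: "AA (Suc n) \<subseteq> AA n"
proof (induction n)
  case 0 then show ?case using P_inv by (simp add: AA_def)
next
  case (Suc n) then show ?case unfolding AA_def by (simp add: Fm_mono)
qed
lemma AA_mono: "m \<le> n \<Longrightarrow> AA n \<subseteq> AA m"
  by (induction n rule: dec_induct) (use AA_dec in auto)

definition "T0 = (\<Inter>n. AA n)"

lemma T0_props: "compact T0" "T0 \<noteq> {}" "T0 = Fm a b T0"
proof -
  have "closed T0" unfolding T0_def using AA_compact by (simp add: closed_INT compact_imp_closed)
  moreover have "T0 \<subseteq> AA 0" unfolding T0_def by auto
  ultimately show "compact T0" using AA_compact[of 0] by (metis compact_Int_closed inf.absorb_iff2)
  show "T0 \<noteq> {}" unfolding T0_def by (rule compact_nest) (use AA_compact AA_ne AA_mono in auto)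
  show "T0 = Fm a b T0"
  proof
    show "Fm a b T0 \<subseteq> T0"
    proof
      fix x assume "x \<in> Fm a b T0"
      then have "x \<in> AA (Suc n)" for n unfolding T0_def AA_def Fm_def by auto
      then have "x \<in> AA n" for n using AA_dec by blast
      then show "x \<in> T0" unfolding T0_def by auto
    qed
    show "T0 \<subseteq> Fm a b T0"
    proof
      fix x assume x: "x \<in> T0"
      define z1 where "z1 = Mm a b x + hv"
      define z2 where "z2 = Mm a b x - hv"
      have x1: "x = f1 a b z1" by (simp add: z1_def f1_Lm)
      have x2: "x = f2 a b z2" by (simp add: z2_def f2_Lm)
      have "z1 \<in> AA n \<or> z2 \<in> AA n" for n
      proof -
        have "x \<in> AA (Suc n)" using x unfolding T0_def by auto
        then obtain z where z: "z \<in> AA n" "x = f1 a b z \<or> x = f2 a b z"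
          unfolding AA_def Fm_def by auto
        then have "z = z1 \<or> z = z2" using x1 x2 unfolding f1_Lm f2_Lm
          by (metis Mm_Lm add_diff_cancel diff_add_cancel z1_def z2_def)
        then show ?thesis using z by auto
      qed
      then have "(\<forall>n. z1 \<in> AA n) \<or> (\<forall>n. z2 \<in> AA n)"
        by (meson AA_mono nat_le_linear subsetD)
      then have "z1 \<in> T0 \<or> z2 \<in> T0" unfolding T0_def by auto
      then show "x \<in> Fm a b T0" unfolding Fm_def using x1 x2 by blast
    qed
  qed
qed

lemma fixed_eq_Orb: assumes "compact K" "K \<noteq> {}" "K = Fm a b K" shows "K = Orb a b"
proof
  show "Orb a b \<subseteq> K" using assms by (intro Orb_sub) (auto simp: compact_imp_closed)
  obtain B where B: "\<forall>x\<in>K. norm x \<le> B" using compact_imp_bounded[OF assms(1)] bounded_iff by blast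
  show "K \<subseteq> Orb a b"
  proof (rule sub_Orb)
    show "\<forall>x\<in>K. nI x \<le> 3 * B" using B nI_le_norm by (meson mult_left_mono order_trans zero_le_numeral)
    show "\<forall>x\<in>K. \<exists>y\<in>K. stp a b x y" using assms(3) Fm_stp by blast
  qed
qed

lemma tw_eq: "twindragon a b = Orb a b"
proof -
  have Q: "compact (Orb a b) \<and> Orb a b \<noteq> {} \<and> Orb a b = f1 a b ` Orb a b \<union> f2 a b ` Orb a b"
    using T0_props fixed_eq_Orb[OF T0_props] by (simp add: Fm_def)
  show ?thesis unfolding twindragon_def
  proof (rule the_equality)
    show "compact (Orb a b) \<and> Orb a b \<noteq> {} \<and> Orb a b = f1 a b ` Orb a b \<union> f2 a b ` Orb a b"
      by (rule Q)
    fix T assume "compact T \<and> T \<noteq> {} \<and> T = f1 a b ` T \<union> f2 a b ` T"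
    then show "T = Orb a b" using fixed_eq_Orb[of T] unfolding Fm_def by blast
  qed
qed

end

lemma transl_iff: "y \<in> (\<lambda>x. x + k) ` S \<longleftrightarrow> y - k \<in> S" for y k :: "real^3"
proof
  assume "y - k \<in> S" then show "y \<in> (\<lambda>x. x + k) ` S" by (rule rev_image_eqI) (simp add: algebra_simps)
qed auto

context twd begin

abbreviation "TT \<equiv> twindragon a b"

lemma TT_props: "compact TT" "TT \<noteq> {}" "TT = Fm a b TT"
  using T0_props fixed_eq_Orb[OF T0_props] tw_eq by auto

lemma TT_closed: "closed TT" using TT_props compact_imp_closed by blast

lemma TT_step: "x \<in> TT \<Longrightarrow> Mm a b x + hv \<in> TT \<or> Mm a b x - hv \<in> TT"
  using Fm_stp[of x a b TT] TT_props(3) unfolding stp_def by auto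

lemma TT_sub: assumes "\<forall>x\<in>X. nI x \<le> B" "\<forall>x\<in>X. Mm a b x + hv \<in> X \<or> Mm a b x - hv \<in> X"
  shows "X \<subseteq> TT"
  unfolding tw_eq by (rule sub_Orb[OF assms(1)]) (use assms(2) in \<open>auto simp: stp_def\<close>)

lemma TT_sub_P: "TT \<subseteq> P"
  unfolding tw_eq by (rule Orb_sub) (use P_compact P_ne P_inv compact_imp_closed in auto)

lemma TT_bounded: "\<exists>B. \<forall>x\<in>TT. nI x \<le> B"
proof -
  obtain B where B: "\<forall>x\<in>TT. norm x \<le> B" using compact_imp_bounded[OF TT_props(1)] bounded_iff by blast
  then have "\<forall>x\<in>TT. nI x \<le> 3 * B" using nI_le_norm by (meson mult_left_mono order_trans zero_le_numeral)
  then show ?thesis by blast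
qed

lemma Bset_iff: "y \<in> Bset TT k \<longleftrightarrow> y \<in> TT \<and> y - k \<in> TT"
  unfolding Bset_def by (simp add: transl_iff)

lemma GD: assumes "y \<in> Bset TT k"
  shows "\<exists>s s'. (s = hv \<or> s = - hv) \<and> (s' = hv \<or> s' = - hv) \<and>
           Mm a b y + s \<in> Bset TT (Mm a b k + s - s')"
proof -
  from assms have y: "y \<in> TT" "y - k \<in> TT" by (auto simp: Bset_iff)
  obtain s where s: "s = hv \<or> s = - hv" "Mm a b y + s \<in> TT"
    using TT_step[OF y(1)] by (metis diff_conv_add_uminus)
  obtain s' where s': "s' = hv \<or> s' = - hv" "Mm a b (y - k) + s' \<in> TT"
    using TT_step[OF y(2)] by (metis diff_conv_add_uminus)
  have eq: "Mm a b y + s - (Mm a b k + s - s') = Mm a b (y - k) + s'" by (simp add: Mm_diff)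
  have "Mm a b y + s - (Mm a b k + s - s') \<in> TT" by (subst eq) (rule s'(2))
  then have "Mm a b y + s \<in> Bset TT (Mm a b k + s - s')" using s(2) by (simp only: Bset_iff)
  then show ?thesis using s(1) s'(1) by blast
qed

lemma TT_two: "\<exists>t1\<in>TT. \<exists>t2\<in>TT. t1 \<noteq> t2"
proof (rule ccontr)
  assume "\<not> ?thesis"
  then obtain x where x: "TT = {x}" using TT_props(2) by blast
  then have "f1 a b x = x" "f2 a b x = x" using TT_props(3) by (auto simp: Fm_def)
  then have "Lm a b (x - hv) = Lm a b (x + hv)" by (simp add: f1_Lm f2_Lm)
  then have "x - hv = x + hv" by (metis Mm_Lm)
  then show False by (simp add: hv_def vec3_zero[symmetric] vec_eq_iff forall_3)
qed

lemma TT_perfect: assumes "x \<in> TT" "0 < e" shows "\<exists>z\<in>TT. z \<noteq> x \<and> dist z x < e"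
proof -
  obtain t1 t2 where t: "t1 \<in> TT" "t2 \<in> TT" "t1 \<noteq> t2" using TT_two by blast
  from assms(1) obtain y B where y: "y 0 = x" "\<forall>j. stp a b (y j) (y (Suc j))" "\<forall>j. nI (y j) \<le> B"
    unfolding tw_eq Orb_def by blast
  have B0: "0 \<le> B" using y(3) nI_nonneg[of "y 0"] by (metis order_trans)
  have "0 \<le> B + nI t1 + nI t2" using B0 nI_nonneg[of t1] nI_nonneg[of t2] by simp
  then obtain n where n: "CC * rr^n * (B + nI t1 + nI t2) < e" using small_pow[OF _ assms(2)] by blast
  have close: "dist w x < e" if w: "x - w = (L^^n) (y n - t)" "t \<in> {t1,t2}" for w t
  proof -
    have "dist w x = norm (x - w)" by (simp add: dist_norm norm_minus_commute)
    also have "\<dots> \<le> nI (x - w)" by (rule norm_le_nI)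
    also have "\<dots> \<le> CC * rr^n * nI (y n - t)" unfolding w(1) by (rule nI_Lpow_contr)
    also have "\<dots> \<le> CC * rr^n * (B + nI t1 + nI t2)"
    proof (intro mult_left_mono)
      have "nI t \<le> nI t1 + nI t2" using w(2) nI_nonneg[of t1] nI_nonneg[of t2] by auto
      then show "nI (y n - t) \<le> B + nI t1 + nI t2"
        using nI_diff_triangle[of "y n" t] y(3)[rule_format, of n] by linarith
    qed (use CC_ge1 rr_bounds in auto)
    finally show ?thesis using n by simp
  qed
  have FT: "Fm a b TT \<subseteq> TT" using TT_props(3) by simp
  obtain w1 where w1: "w1 \<in> TT" "y 0 - w1 = (L^^n) (y n - t1)" using back_orb[OF FT t(1) y(2)] by blast
  obtain w2 where w2: "w2 \<in> TT" "y 0 - w2 = (L^^n) (y n - t2)" using back_orb[OF FT t(2) y(2)] by blast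
  have "w1 \<noteq> w2"
  proof
    assume "w1 = w2"
    then have "(L^^n) (y n - t1) = (L^^n) (y n - t2)" using w1 w2 by simp
    then have "y n - t1 = y n - t2" by (rule Lm_pow_inj)
    then show False using t by simp
  qed
  then have "w1 \<noteq> x \<or> w2 \<noteq> x" by auto
  then show ?thesis using close[of w1 t1] close[of w2 t2] w1 w2 y(1) by auto
qed

lemma single_path:
  assumes S: "\<And>k y y'. k \<in> S \<Longrightarrow> y \<in> Bset TT k \<Longrightarrow> y' \<in> Bset TT k \<Longrightarrow>
      \<exists>k'\<in>S. \<exists>s. Mm a b y + s \<in> Bset TT k' \<and> Mm a b y' + s \<in> Bset TT k'"
    and k: "k \<in> S" and y: "y \<in> Bset TT k" "y' \<in> Bset TT k"
  shows "y = y'"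
proof -
  obtain B where B: "\<forall>x\<in>TT. nI x \<le> B" using TT_bounded by blast
  have path: "\<exists>k'\<in>S. \<exists>c. (Mm a b ^^ n) y + c \<in> Bset TT k' \<and> (Mm a b ^^ n) y' + c \<in> Bset TT k'" for n
  proof (induction n)
    case 0 then show ?case using k y by (intro bexI[of _ k] exI[of _ 0]) auto
  next
    case (Suc n)
    then obtain k' c where kc: "k' \<in> S" "(Mm a b ^^ n) y + c \<in> Bset TT k'" "(Mm a b ^^ n) y' + c \<in> Bset TT k'"
      by blast
    from S[OF kc] obtain k'' s where ks: "k'' \<in> S" "Mm a b ((Mm a b ^^ n) y + c) + s \<in> Bset TT k''"
        "Mm a b ((Mm a b ^^ n) y' + c) + s \<in> Bset TT k''" by blast
    show ?case using ks by (intro bexI[of _ k''] exI[of _ "Mm a b c + s"]) (auto simp: Mm_add add.assoc)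
  qed
  then have "nI ((Mm a b ^^ n) (y - y')) \<le> 2 * B" for n
  proof -
    obtain k' c where kc: "(Mm a b ^^ n) y + c \<in> TT" "(Mm a b ^^ n) y' + c \<in> TT"
      using path[of n] by (auto simp: Bset_iff)
    have Mdiff: "(Mm a b ^^ n) (y - y') = (Mm a b ^^ n) y - (Mm a b ^^ n) y'"
      by (induction n) (auto simp: Mm_diff)
    have "(Mm a b ^^ n) (y - y') = ((Mm a b ^^ n) y + c) - ((Mm a b ^^ n) y' + c)"
      by (simp add: Mdiff)
    then have "nI ((Mm a b ^^ n) (y - y')) = nI (((Mm a b ^^ n) y + c) - ((Mm a b ^^ n) y' + c))"
      by simp
    moreover have "nI ((Mm a b ^^ n) y + c) \<le> B" "nI ((Mm a b ^^ n) y' + c) \<le> B" using kc B by auto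
    ultimately show ?thesis using nI_diff_triangle[of "(Mm a b ^^ n) y + c" "(Mm a b ^^ n) y' + c"]
      by linarith
  qed
  then have "y - y' = 0" by (rule shrink_zero)
  then show ?thesis by simp
qed

end

lemma lattice3_iff: "m \<in> lattice3 \<longleftrightarrow> (\<exists>i j l::int. m = vec3 (of_int i) (of_int j) (of_int l))"
proof
  assume "m \<in> lattice3"
  then have "m$1 \<in> \<int>" "m$2 \<in> \<int>" "m$3 \<in> \<int>" unfolding lattice3_def by auto
  then obtain i j l where "m$1 = of_int i" "m$2 = of_int j" "m$3 = of_int l" by (metis Ints_cases)
  then show "\<exists>i j l::int. m = vec3 (of_int i) (of_int j) (of_int l)" by (metis vec3_eta)
next
  assume "\<exists>i j l::int. m = vec3 (of_int i) (of_int j) (of_int l)"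
  then show "m \<in> lattice3" unfolding lattice3_def by (auto simp: forall_3)
qed

lemma finite_lattice_ball: "finite {m \<in> lattice3. nI m \<le> R}"
proof -
  let ?I = "{-\<lceil>R\<rceil>..\<lceil>R\<rceil>}"
  have "{m \<in> lattice3. nI m \<le> R} \<subseteq> (\<lambda>(i,j,l). vec3 (of_int i) (of_int j) (of_int l)) ` (?I \<times> ?I \<times> ?I)"
  proof
    fix m assume m: "m \<in> {m \<in> lattice3. nI m \<le> R}"
    then obtain i j l :: int where e: "m = vec3 (of_int i) (of_int j) (of_int l)" by (auto simp: lattice3_iff)
    have "\<bar>of_int i\<bar> \<le> R" "\<bar>of_int j\<bar> \<le> R" "\<bar>of_int l\<bar> \<le> (R::real)"
      using m unfolding e nI_def by auto
    moreover have "\<bar>i\<bar> \<le> \<lceil>R\<rceil>" if "\<bar>of_int i\<bar> \<le> R" for i :: int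
    proof -
      have "real_of_int \<bar>i\<bar> \<le> real_of_int \<lceil>R\<rceil>" using that le_of_int_ceiling[of R] by linarith
      then show ?thesis by (simp only: of_int_le_iff)
    qed
    ultimately have "\<bar>i\<bar> \<le> \<lceil>R\<rceil>" "\<bar>j\<bar> \<le> \<lceil>R\<rceil>" "\<bar>l\<bar> \<le> \<lceil>R\<rceil>" by auto
    then show "m \<in> (\<lambda>(i,j,l). vec3 (of_int i) (of_int j) (of_int l)) ` (?I \<times> ?I \<times> ?I)"
      unfolding e by (intro image_eqI[of _ _ "(i,j,l)"]) auto
  qed
  then show ?thesis by (rule finite_subset) auto
qed

lemma nI_le_3dist: "nI (x - y) \<le> 3 * dist x y"
  using nI_le_norm[of "x - y"] by (simp add: dist_norm)

lemma closed_transl: "closed S \<Longrightarrow> closed ((\<lambda>x. x + k) ` S)" for k :: "real^3"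
  using closed_translation[of S k] by (simp add: add.commute)

lemma vec3_lattice: "vec3 (of_int i) (of_int j) (of_int l) \<in> lattice3"
  unfolding lattice3_def by (auto simp: forall_3)

lemma lattice_add: "m \<in> lattice3 \<Longrightarrow> m' \<in> lattice3 \<Longrightarrow> m + m' \<in> lattice3"
  unfolding lattice3_def by auto
lemma lattice_diff: "m \<in> lattice3 \<Longrightarrow> m' \<in> lattice3 \<Longrightarrow> m - m' \<in> lattice3"
  unfolding lattice3_def by auto
lemma lattice_zero: "0 \<in> lattice3" unfolding lattice3_def by auto

context twd begin

definition "YY = {x. \<exists>m\<in>lattice3. x - m \<in> TT}"

lemma YY_closed: "closed YY"
proof -
  obtain B where B: "\<forall>x\<in>TT. nI x \<le> B" using TT_bounded by blast
  show ?thesis unfolding closed_limpt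
  proof (intro allI impI)
    fix x assume "x islimpt YY"
    let ?R = "nI x + 3 + B"
    let ?Z = "\<Union>m\<in>{m \<in> lattice3. nI m \<le> ?R}. (\<lambda>t. t + m) ` TT"
    have cZ: "closed ?Z"
      by (intro closed_UN finite_lattice_ball ballI closed_transl TT_closed)
    have "x islimpt ?Z" unfolding islimpt_approachable
    proof (intro allI impI)
      fix e :: real assume e: "0 < e"
      obtain z where z: "z \<in> YY" "z \<noteq> x" "dist z x < min e 1"
        using \<open>x islimpt YY\<close> e unfolding islimpt_approachable by (meson less_numeral_extra(1) min_less_iff_conj)
      from z(1) obtain m where m: "m \<in> lattice3" "z - m \<in> TT" unfolding YY_def by auto
      have "nI m \<le> nI (z - m) + nI z" using nI_diff_triangle[of z "z - m"] by simp
      moreover have "nI z \<le> nI x + nI (z - x)" using nI_triangle[of x "z - x"] by simp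
      moreover have "nI (z - x) \<le> 3" using nI_le_3dist[of z x] z(3) by simp
      ultimately have "nI m \<le> ?R" using B m by fastforce
      then have "z \<in> ?Z" using m by (auto simp: transl_iff)
      then show "\<exists>z\<in>?Z. z \<noteq> x \<and> dist z x < e" using z by auto
    qed
    then have "x \<in> ?Z" using cZ closed_limpt by blast
    then show "x \<in> YY" unfolding YY_def by (auto simp: transl_iff)
  qed
qed

lemma lattice_hv: assumes "m \<in> lattice3"
  shows "\<exists>m'\<in>lattice3. m + hv = Mm a b m' + hv \<or> m + hv = Mm a b m' - hv"
proof -
  obtain i j l :: int where e: "m = vec3 (of_int i) (of_int j) (of_int l)" using assms by (auto simp: lattice3_iff)
  show ?thesis
  proof (cases "even i")
    case True
    then obtain q where q: "i = 2*q" by auto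
    let ?m = "vec3 (of_int (j - b*q)) (of_int (l - a*q)) (of_int q)"
    have "m + hv = Mm a b ?m + hv" unfolding e q by (simp add: Mm_vec3 hv_def)
    then show ?thesis using vec3_lattice by blast
  next
    case False
    then obtain q0 where q0: "i = 2*q0 + 1" by (rule oddE)
    define q where "q = q0 + 1"
    have q: "i = 2*q - 1" using q0 q_def by simp
    let ?m = "vec3 (of_int (j - b*q)) (of_int (l - a*q)) (of_int q)"
    have "m + hv = Mm a b ?m - hv" unfolding e q by (simp add: Mm_vec3 hv_def)
    then show ?thesis using vec3_lattice by blast
  qed
qed

lemma YY_g: assumes "y \<in> YY" shows "L (y + hv) \<in> YY"
proof -
  from assms obtain m where m: "m \<in> lattice3" "y - m \<in> TT" unfolding YY_def by auto
  obtain m' where m': "m' \<in> lattice3" "m + hv = Mm a b m' + hv \<or> m + hv = Mm a b m' - hv"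
    using lattice_hv[OF m(1)] by blast
  have T2: "f1 a b (y - m) \<in> TT" "f2 a b (y - m) \<in> TT" using m(2) TT_props(3) by (auto simp: Fm_def)
  from m'(2) show ?thesis
  proof
    assume h: "m + hv = Mm a b m' + hv"
    have "L (y + hv) = L ((y - m) + hv) + m'"
      by (metis (no_types, lifting) h Lm_Mm Lm_add add.assoc add.commute add_diff_cancel_left' diff_add_cancel)
    then have "L (y + hv) - m' = f2 a b (y - m)" by (simp add: f2_Lm)
    then have "L (y + hv) - m' \<in> TT" using T2 by simp
    then show ?thesis unfolding YY_def using m'(1) by blast
  next
    assume h: "m + hv = Mm a b m' - hv"
    have eq: "y + hv = (y - m - hv) + Mm a b m'" using h by (simp add: algebra_simps)
    have "L (y + hv) = L ((y - m - hv) + Mm a b m')" by (simp only: eq)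
    also have "\<dots> = L ((y - m) - hv) + m'" by (simp only: Lm_add Lm_Mm)
    finally have "L (y + hv) = L ((y - m) - hv) + m'" .
    then have "L (y + hv) - m' = f1 a b (y - m)" by (simp add: f1_Lm)
    then have "L (y + hv) - m' \<in> TT" using T2 by simp
    then show ?thesis unfolding YY_def using m'(1) by blast
  qed
qed

lemma YY_coarse: "\<exists>q\<in>YY. nI (q - pt) \<le> 3"
proof -
  obtain t0 where t0: "t0 \<in> TT" using TT_props by auto
  obtain d1 d2 d3 where d: "pt - t0 = vec3 d1 d2 d3" by (metis vec3_eta)
  define m where "m = vec3 (of_int \<lfloor>d1\<rfloor>) (of_int \<lfloor>d2\<rfloor>) (of_int \<lfloor>d3\<rfloor>)"
  have ml: "m \<in> lattice3" unfolding m_def lattice3_iff by blast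
  have "t0 + m \<in> YY" unfolding YY_def using ml t0 by force
  moreover have "nI (t0 + m - pt) \<le> 3"
  proof -
    have "t0 + m - pt = m - (pt - t0)" by (simp add: algebra_simps)
    then have e: "t0 + m - pt = vec3 (of_int \<lfloor>d1\<rfloor> - d1) (of_int \<lfloor>d2\<rfloor> - d2) (of_int \<lfloor>d3\<rfloor> - d3)"
      by (simp add: d m_def)
    have f: "\<bar>of_int \<lfloor>r\<rfloor> - r\<bar> \<le> 1" for r :: real
      using of_int_floor_le[of r] real_of_int_floor_gt_diff_one[of r] by linarith
    show ?thesis unfolding e nI_def using f[of d1] f[of d2] f[of d3] by simp
  qed
  ultimately show ?thesis by blast
qed

lemma YY_fine: "\<exists>q\<in>YY. \<exists>v. nI v \<le> 3 \<and> q - pt = (L^^n) v"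
proof (induction n arbitrary: pt)
  case 0 then show ?case using YY_coarse[of pt] by auto
next
  case (Suc n)
  obtain q' v where q': "q' \<in> YY" "nI v \<le> 3" "q' - (Mm a b pt - hv) = (L^^n) v" using Suc by blast
  have "L (q' + hv) - pt = L (q' - (Mm a b pt - hv))" by (simp add: Lm_diff Lm_add algebra_simps)
  also have "\<dots> = (L^^Suc n) v" using q'(3) by simp
  finally show ?case using YY_g[OF q'(1)] q'(2) by blast
qed

lemma covering: "\<exists>m\<in>lattice3. x - m \<in> TT"
proof -
  have "x \<in> closure YY" unfolding closure_approachable
  proof (intro allI impI)
    fix e :: real assume e: "0 < e"
    obtain n where n: "CC * rr^n * 3 < e" using small_pow[of 3 e] e by auto
    obtain q v where q: "q \<in> YY" "nI v \<le> 3" "q - x = (L^^n) v" using YY_fine by blast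
    have "dist q x \<le> nI (q - x)" using norm_le_nI[of "q - x"] by (simp add: dist_norm)
    also have "\<dots> \<le> CC * rr^n * nI v" unfolding q(3) by (rule nI_Lpow_contr)
    also have "\<dots> \<le> CC * rr^n * 3" using q(2) CC_ge1 rr_bounds by (intro mult_left_mono) auto
    finally show "\<exists>q\<in>YY. dist q x < e" using q(1) n by force
  qed
  then show ?thesis using YY_closed unfolding YY_def by simp
qed

lemma face_crit:
  assumes k: "k \<noteq> 0" and x: "x \<in> Bset TT k"
    and others: "\<forall>m\<in>lattice3. m \<noteq> 0 \<longrightarrow> m \<noteq> k \<longrightarrow> x - m \<notin> TT"
  shows "is_face TT k"
proof -
  obtain B where B: "\<forall>x\<in>TT. nI x \<le> B" using TT_bounded by blast
  let ?R = "nI x + 3 + B"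
  let ?Z = "\<Union>m\<in>{m \<in> lattice3. nI m \<le> ?R \<and> m \<noteq> 0 \<and> m \<noteq> k}. (\<lambda>t. t + m) ` TT"
  have cZ: "closed ?Z"
    by (intro closed_UN ballI closed_transl TT_closed finite_subset[OF _ finite_lattice_ball[of ?R]]) auto
  have xZ: "x \<notin> ?Z" using others by (auto simp: transl_iff)
  define U where "U = ball x 1 - ?Z"
  have oU: "open U" unfolding U_def using cZ by auto
  have xU: "x \<in> U" unfolding U_def using xZ by auto
  have UT: "U \<subseteq> TT \<union> (\<lambda>y. y + k) ` TT"
  proof
    fix z assume z: "z \<in> U"
    obtain m where m: "m \<in> lattice3" "z - m \<in> TT" using covering by blast
    have "nI m \<le> nI (z - m) + nI z" using nI_diff_triangle[of z "z - m"] by simp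
    moreover have "nI z \<le> nI x + nI (z - x)" using nI_triangle[of x "z - x"] by simp
    moreover have "nI (z - x) \<le> 3" using nI_le_3dist[of z x] z unfolding U_def by (simp add: dist_commute)
    ultimately have "nI m \<le> ?R" using B m by fastforce
    then have "m = 0 \<or> m = k" using z m unfolding U_def by (auto simp: transl_iff)
    then show "z \<in> TT \<union> (\<lambda>y. y + k) ` TT" using m by (auto simp: transl_iff)
  qed
  have UF: "U \<inter> frontier TT \<subseteq> Bset TT k"
  proof
    fix z assume z: "z \<in> U \<inter> frontier TT"
    then have zT: "z \<in> TT" using TT_closed frontier_subset_closed by auto
    have "z \<in> closure (- TT)" using z unfolding frontier_def by (simp add: closure_complement)
    then have "z \<in> closure (U \<inter> - TT)" using open_Int_closure_subset[OF oU] z by blast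
    moreover have "U \<inter> - TT \<subseteq> (\<lambda>y. y + k) ` TT" using UT by auto
    ultimately have "z \<in> closure ((\<lambda>y. y + k) ` TT)"
      using closure_mono[of "U \<inter> - TT" "(\<lambda>y. y + k) ` TT"] by blast
    then have "z \<in> (\<lambda>y. y + k) ` TT" using closure_closed[OF closed_transl[OF TT_closed, of k]] by simp
    then show "z \<in> Bset TT k" using zT by (simp add: Bset_def)
  qed
  show ?thesis unfolding is_face_def using k x oU xU UT UF by blast
qed

lemma nonface_crit:
  assumes fin: "finite (Bset TT k)" shows "\<not> is_face TT k"
proof
  assume "is_face TT k"
  then obtain x U where x: "x \<in> Bset TT k" and U: "open U" "x \<in> U" "U \<inter> frontier TT \<subseteq> Bset TT k"
    unfolding is_face_def by blast
  obtain e1 where e1: "0 < e1" "ball x e1 \<subseteq> U" using U open_contains_ball by blast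
  obtain e2 where e2: "0 < e2" "\<forall>y\<in>Bset TT k. y \<noteq> x \<longrightarrow> e2 \<le> dist x y"
    using finite_set_avoid[OF fin, of x] by blast
  define e where "e = min e1 e2"
  have e: "0 < e" using e1 e2 by (simp add: e_def)
  let ?S = "ball x e - {x}"
  have cS: "connected ?S" by (rule connected_punctured_ball) simp
  have xT: "x \<in> TT" "x - k \<in> TT" using x by (auto simp: Bset_iff)
  have avoid: "y \<notin> Bset TT k" if "y \<in> ?S" for y
    using that e2 by (auto simp: e_def dist_commute)
  have "\<not> (?S \<inter> TT \<noteq> {} \<and> ?S - TT \<noteq> {})"
  proof
    assume "?S \<inter> TT \<noteq> {} \<and> ?S - TT \<noteq> {}"
    then obtain z where z: "z \<in> ?S" "z \<in> frontier TT" using connected_Int_frontier[OF cS] by blast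
    then have "z \<in> U" using e1 by (auto simp: e_def)
    then show False using z U(3) avoid by blast
  qed
  then consider "?S \<inter> TT = {}" | "?S \<subseteq> TT" by blast
  then show False
  proof cases
    case 1
    obtain z where "z \<in> TT" "z \<noteq> x" "dist z x < e" using TT_perfect[OF xT(1) e] by blast
    then show False using 1 by (auto simp: dist_commute)
  next
    case 2
    obtain w where w: "w \<in> TT" "w \<noteq> x - k" "dist w (x - k) < e" using TT_perfect[OF xT(2) e] by blast
    have "dist (w + k) x = dist w (x - k)" by (simp add: dist_norm algebra_simps)
    moreover have "w + k \<noteq> x" using w(2) by (auto simp: algebra_simps)
    ultimately have "w + k \<in> ?S" using w(3) by (simp add: dist_commute)
    moreover have "w + k \<in> Bset TT k" using 2 w calculation by (auto simp: Bset_iff)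
    ultimately show False using avoid by blast
  qed
qed

end

type_synonym i3 = "int \<times> int \<times> int"

definition Mi :: "int \<Rightarrow> int \<Rightarrow> i3 \<Rightarrow> i3" where
  "Mi a b p = (case p of (i,j,l) \<Rightarrow> (2*l, i + b*l, j + a*l))"
definition sh :: "int \<Rightarrow> i3 \<Rightarrow> i3" where
  "sh t p = (case p of (i,j,l) \<Rightarrow> (i+t, j, l))"
definition toV :: "int \<Rightarrow> i3 \<Rightarrow> real^3" where
  "toV q p = (case p of (i,j,l) \<Rightarrow> vec3 (of_int i / of_int q) (of_int j / of_int q) (of_int l / of_int q))"
definition outside :: "i3 \<Rightarrow> i3 \<Rightarrow> bool" where
  "outside c p = (case c of (c1,c2,c3) \<Rightarrow> case p of (i,j,l) \<Rightarrow> c1 < \<bar>i\<bar> \<or> c2 < \<bar>j\<bar> \<or> c3 < \<bar>l\<bar>)"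
definition subs :: "int \<Rightarrow> i3 \<Rightarrow> i3 \<Rightarrow> i3" where
  "subs q p m = (case p of (i,j,l) \<Rightarrow> case m of (m1,m2,m3) \<Rightarrow> (i - q*m1, j - q*m2, l - q*m3))"

fun dead :: "int \<Rightarrow> int \<Rightarrow> int \<Rightarrow> i3 \<Rightarrow> nat \<Rightarrow> i3 \<Rightarrow> bool" where
  "dead a b h c 0 p = outside c p"
| "dead a b h c (Suc n) p = (outside c p \<or> (dead a b h c n (sh h (Mi a b p)) \<and> dead a b h c n (sh (-h) (Mi a b p))))"

fun deadK :: "int \<Rightarrow> int \<Rightarrow> i3 \<Rightarrow> nat \<Rightarrow> i3 \<Rightarrow> bool" where
  "deadK a b c 0 k = outside c k"
| "deadK a b c (Suc n) k = (outside c k \<or> (deadK a b c n (sh 1 (Mi a b k)) \<and> deadK a b c n (Mi a b k)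
      \<and> deadK a b c n (sh (-1) (Mi a b k))))"

definition closedL :: "int \<Rightarrow> int \<Rightarrow> int \<Rightarrow> i3 list \<Rightarrow> bool" where
  "closedL a b h xs = (\<forall>p\<in>set xs. sh h (Mi a b p) \<in> set xs \<or> sh (-h) (Mi a b p) \<in> set xs)"

lemma toV_Mi: "Mm a b (toV q p) = toV q (Mi a b p)"
  by (cases p) (simp add: toV_def Mi_def Mm_vec3 add_divide_distrib)

lemma toV_sh: assumes "q = 2*h" "h \<noteq> 0"
  shows "toV q (sh h p) = toV q p + hv" "toV q (sh (-h) p) = toV q p - hv"
  using assms by (cases p, simp add: toV_def sh_def hv_def add_divide_distrib diff_divide_distrib)+

lemma toV_lattice: "toV 1 k \<in> lattice3"
  by (cases k) (simp add: toV_def vec3_lattice)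

lemma lattice_toV: "m \<in> lattice3 \<Longrightarrow> \<exists>k. m = toV 1 k"
  by (auto simp: lattice3_iff toV_def)

lemma toV_subs: "q \<noteq> 0 \<Longrightarrow> toV q p - toV 1 m = toV q (subs q p m)"
  by (cases p, cases m) (simp add: toV_def subs_def diff_divide_distrib)

lemma toV_inj: "q \<noteq> 0 \<Longrightarrow> toV q p = toV q p' \<longleftrightarrow> p = p'"
  by (cases p, cases p') (auto simp: toV_def)

lemma toV_zero: "toV 1 k = 0 \<longleftrightarrow> k = (0,0,0)"
  by (cases k) (auto simp: toV_def vec3_zero)

lemma Mi_zero: "Mi a b k = (0,0,0) \<Longrightarrow> k = (0,0,0)"
  by (cases k) (auto simp: Mi_def)

locale twdb = twd +
  fixes \<beta>1 \<beta>2 \<beta>3 :: real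
  assumes P_box: "\<forall>x\<in>P. \<bar>x$1\<bar> \<le> \<beta>1 \<and> \<bar>x$2\<bar> \<le> \<beta>2 \<and> \<bar>x$3\<bar> \<le> \<beta>3"
begin

lemma TT_box: "x \<in> TT \<Longrightarrow> \<bar>x$1\<bar> \<le> \<beta>1 \<and> \<bar>x$2\<bar> \<le> \<beta>2 \<and> \<bar>x$3\<bar> \<le> \<beta>3"
  using TT_sub_P P_box by blast

definition "cok q c \<longleftrightarrow> (case c of (c1,c2,c3) \<Rightarrow> of_int q * \<beta>1 < of_int c1 + 1 \<and> of_int q * \<beta>2 < of_int c2 + 1 \<and> of_int q * \<beta>3 < of_int c3 + 1)"

lemma outside_not: assumes "0 < q" "cok q c" "outside c z" shows "toV q z \<notin> TT"
proof
  assume "toV q z \<in> TT"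
  from TT_box[OF this] obtain i j l where z: "z = (i,j,l)" by (cases z) auto
  obtain c1 c2 c3 where c: "c = (c1,c2,c3)" by (cases c) auto
  have q: "0 < real_of_int q" using assms(1) by simp
  from TT_box[OF \<open>toV q z \<in> TT\<close>] have "\<bar>of_int i / of_int q\<bar> \<le> \<beta>1" "\<bar>of_int j / of_int q\<bar> \<le> \<beta>2" "\<bar>of_int l / of_int q\<bar> \<le> \<beta>3"
    by (auto simp: z toV_def)
  then have "\<bar>real_of_int i\<bar> \<le> of_int q * \<beta>1" "\<bar>real_of_int j\<bar> \<le> of_int q * \<beta>2" "\<bar>real_of_int l\<bar> \<le> of_int q * \<beta>3"
    using q by (auto simp: abs_divide pos_divide_le_eq mult.commute)
  then have "\<bar>real_of_int i\<bar> < of_int c1 + 1" "\<bar>real_of_int j\<bar> < of_int c2 + 1" "\<bar>real_of_int l\<bar> < of_int c3 + 1"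
    using assms(2) by (auto simp: cok_def c)
  then have "\<bar>i\<bar> \<le> c1" "\<bar>j\<bar> \<le> c2" "\<bar>l\<bar> \<le> c3" by linarith+
  then show False using assms(3) by (simp add: outside_def c z)
qed

lemma dead_sound: assumes "0 < h" "cok (2*h) c" "dead a b h c n z" shows "toV (2*h) z \<notin> TT"
  using assms(3)
proof (induction n arbitrary: z)
  case 0 then show ?case using outside_not[OF _ assms(2)] assms(1) by simp
next
  case (Suc n)
  show ?case
  proof (cases "outside c z")
    case True then show ?thesis using outside_not[OF _ assms(2)] assms(1) by simp
  next
    case False
    with Suc.prems have d: "dead a b h c n (sh h (Mi a b z))" "dead a b h c n (sh (-h) (Mi a b z))" by auto
    show ?thesis
    proof
      assume "toV (2*h) z \<in> TT"
      from TT_step[OF this] have "toV (2*h) (sh h (Mi a b z)) \<in> TT \<or> toV (2*h) (sh (-h) (Mi a b z)) \<in> TT"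
        using toV_sh[of "2*h" h] assms(1) by (simp add: toV_Mi)
      then show False using Suc.IH d by blast
    qed
  qed
qed

lemma GD_int: assumes "y \<in> Bset TT (toV 1 k)"
  shows "Mm a b y + hv \<in> Bset TT (toV 1 (sh 1 (Mi a b k))) \<or> Mm a b y - hv \<in> Bset TT (toV 1 (sh (-1) (Mi a b k)))
    \<or> Mm a b y + hv \<in> Bset TT (toV 1 (Mi a b k)) \<or> Mm a b y - hv \<in> Bset TT (toV 1 (Mi a b k))"
proof -
  obtain s s' where ss: "s = hv \<or> s = - hv" "s' = hv \<or> s' = - hv" "Mm a b y + s \<in> Bset TT (Mm a b (toV 1 k) + s - s')"
    using GD[OF assms] by blast
  have e1': "toV 1 (sh 1 w) = toV 1 w + hv - - hv" for w
    by (cases w) (simp add: toV_def sh_def hv_def)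
  have e2': "toV 1 (sh (-1) w) = toV 1 w + - hv - hv" for w
    by (cases w) (simp add: toV_def sh_def hv_def)
  have e1: "toV 1 (sh 1 (Mi a b k)) = Mm a b (toV 1 k) + hv - - hv"
    using e1'[of "Mi a b k"] by (simp only: toV_Mi[symmetric])
  have e2: "toV 1 (sh (-1) (Mi a b k)) = Mm a b (toV 1 k) + - hv - hv"
    using e2'[of "Mi a b k"] by (simp only: toV_Mi[symmetric])
  have e3: "Mm a b (toV 1 k) + hv - hv = toV 1 (Mi a b k)" "Mm a b (toV 1 k) + - hv - - hv = toV 1 (Mi a b k)"
    by (simp_all add: toV_Mi)
  from ss(1) show ?thesis
  proof
    assume s: "s = hv"
    from ss(2) show ?thesis
    proof
      assume s': "s' = hv"
      have "Mm a b y + hv \<in> Bset TT (toV 1 (Mi a b k))" using ss(3) unfolding s s' e3(1) .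
      then show ?thesis by blast
    next
      assume s': "s' = - hv"
      have "Mm a b y + hv \<in> Bset TT (toV 1 (sh 1 (Mi a b k)))" using ss(3) unfolding s s' e1[symmetric] .
      then show ?thesis by blast
    qed
  next
    assume s: "s = - hv"
    from ss(2) show ?thesis
    proof
      assume s': "s' = hv"
      have "Mm a b y + - hv \<in> Bset TT (toV 1 (sh (-1) (Mi a b k)))" using ss(3) unfolding s s' e2[symmetric] .
      then show ?thesis by simp
    next
      assume s': "s' = - hv"
      have "Mm a b y + - hv \<in> Bset TT (toV 1 (Mi a b k))" using ss(3) unfolding s s' e3(2) .
      then show ?thesis by simp
    qed
  qed
qed

lemma outsideK_empty: assumes "cok 2 c" "outside c k" shows "Bset TT (toV 1 k) = {}"
proof (rule ccontr)
  assume "Bset TT (toV 1 k) \<noteq> {}"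
  then obtain y where y: "y \<in> TT" "y - toV 1 k \<in> TT" by (auto simp: Bset_iff)
  obtain i j l where k: "k = (i,j,l)" by (cases k) auto
  obtain c1 c2 c3 where c: "c = (c1,c2,c3)" by (cases c) auto
  have b1: "\<bar>y$1\<bar> \<le> \<beta>1" "\<bar>y$2\<bar> \<le> \<beta>2" "\<bar>y$3\<bar> \<le> \<beta>3" using TT_box[OF y(1)] by auto
  have b2: "\<bar>y$1 - of_int i\<bar> \<le> \<beta>1" "\<bar>y$2 - of_int j\<bar> \<le> \<beta>2" "\<bar>y$3 - of_int l\<bar> \<le> \<beta>3"
    using TT_box[OF y(2)] by (auto simp: k toV_def)
  have "\<bar>real_of_int i\<bar> < of_int c1 + 1" "\<bar>real_of_int j\<bar> < of_int c2 + 1" "\<bar>real_of_int l\<bar> < of_int c3 + 1"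
    using b1 b2 assms(1) by (auto simp: cok_def c)
  then have "\<bar>i\<bar> \<le> c1" "\<bar>j\<bar> \<le> c2" "\<bar>l\<bar> \<le> c3" by linarith+
  then show False using assms(2) by (simp add: outside_def c k)
qed

lemma deadK_sound: assumes "cok 2 c" "deadK a b c n k" "k \<noteq> (0,0,0)"
  shows "Bset TT (toV 1 k) = {}"
  using assms(2,3)
proof (induction n arbitrary: k)
  case 0 then show ?case using outsideK_empty[OF assms(1)] by simp
next
  case (Suc n)
  show ?case
  proof (cases "outside c k")
    case True then show ?thesis using outsideK_empty[OF assms(1)] by simp
  next
    case False
    with Suc.prems have d: "deadK a b c n (sh 1 (Mi a b k))" "deadK a b c n (Mi a b k)" "deadK a b c n (sh (-1) (Mi a b k))"
      by auto
    have nz: "Mi a b k \<noteq> (0,0,0)" using Suc.prems(2) Mi_zero by blast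
    have nz1: "sh 1 (Mi a b k) \<noteq> (0,0,0)" "sh (-1) (Mi a b k) \<noteq> (0,0,0)"
      by (cases k, simp add: Mi_def sh_def, presburger)+
    have "Bset TT (toV 1 (sh 1 (Mi a b k))) = {}" "Bset TT (toV 1 (Mi a b k)) = {}"
         "Bset TT (toV 1 (sh (-1) (Mi a b k))) = {}"
      using Suc.IH d nz nz1 by auto
    then show ?thesis using GD_int by blast
  qed
qed

lemma closedL_sound: assumes "0 < h" "closedL a b h xs" "z \<in> set xs" shows "toV (2*h) z \<in> TT"
proof -
  let ?X = "toV (2*h) ` set xs"
  have "?X \<subseteq> TT"
  proof (rule TT_sub)
    show "\<forall>x\<in>?X. nI x \<le> (\<Sum>x\<in>?X. nI x)"
      by (intro ballI member_le_sum) (auto simp: nI_nonneg)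
    show "\<forall>x\<in>?X. Mm a b x + hv \<in> ?X \<or> Mm a b x - hv \<in> ?X"
    proof
      fix x assume "x \<in> ?X"
      then obtain w where w: "w \<in> set xs" "x = toV (2*h) w" by auto
      have e: "Mm a b x + hv = toV (2*h) (sh h (Mi a b w))" "Mm a b x - hv = toV (2*h) (sh (-h) (Mi a b w))"
        using toV_sh[of "2*h" h] assms(1) by (simp_all add: w(2) toV_Mi)
      from assms(2) w(1) have "sh h (Mi a b w) \<in> set xs \<or> sh (-h) (Mi a b w) \<in> set xs"
        by (simp add: closedL_def)
      then show "Mm a b x + hv \<in> ?X \<or> Mm a b x - hv \<in> ?X" unfolding e by blast
    qed
  qed
  then show ?thesis using assms(3) by auto
qed

end

definition cands :: "int \<Rightarrow> i3 \<Rightarrow> i3 \<Rightarrow> i3 list" where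
  "cands q c z = (case c of (c1,c2,c3) \<Rightarrow> case z of (i,j,l) \<Rightarrow>
     [(m1,m2,m3). m1 \<leftarrow> [-((\<bar>i\<bar>+c1) div q)..(\<bar>i\<bar>+c1) div q], m2 \<leftarrow> [-((\<bar>j\<bar>+c2) div q)..(\<bar>j\<bar>+c2) div q],
        m3 \<leftarrow> [-((\<bar>l\<bar>+c3) div q)..(\<bar>l\<bar>+c3) div q]])"

definition checkFace :: "int \<Rightarrow> int \<Rightarrow> int \<Rightarrow> i3 \<Rightarrow> nat \<Rightarrow> i3 \<Rightarrow> i3 \<Rightarrow> bool" where
  "checkFace a b h c n z kk = (\<forall>m\<in>set (cands (2*h) c z). m = (0,0,0) \<or> m = kk \<or> dead a b h c n (subs (2*h) z m))"

definition boxL :: "i3 \<Rightarrow> i3 list" where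
  "boxL c = (case c of (c1,c2,c3) \<Rightarrow> [(m1,m2,m3). m1 \<leftarrow> [-c1..c1], m2 \<leftarrow> [-c2..c2], m3 \<leftarrow> [-c3..c3]])"

definition nbCheck :: "int \<Rightarrow> int \<Rightarrow> i3 \<Rightarrow> nat \<Rightarrow> i3 list \<Rightarrow> bool" where
  "nbCheck a b c n NB = (\<forall>k\<in>set (boxL c). k = (0,0,0) \<or> k \<in> set NB \<or> deadK a b c n k)"

definition witOK :: "int \<Rightarrow> int \<Rightarrow> i3 \<Rightarrow> int \<Rightarrow> i3 list \<Rightarrow> i3 \<Rightarrow> bool" where
  "witOK a b kk h xs z \<longleftrightarrow> 0 < h \<and> closedL a b h xs \<and> z \<in> set xs \<and> subs (2*h) z kk \<in> set xs"

definition sgCheck :: "int \<Rightarrow> int \<Rightarrow> i3 \<Rightarrow> nat \<Rightarrow> i3 list \<Rightarrow> bool" where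
  "sgCheck a b c n SL = (\<forall>kk\<in>set SL. kk \<noteq> (0,0,0) \<and>
     ((sh 1 (Mi a b kk) \<in> set SL \<and> deadK a b c n (sh (-1) (Mi a b kk)) \<and> deadK a b c n (Mi a b kk)) \<or>
      (sh (-1) (Mi a b kk) \<in> set SL \<and> deadK a b c n (sh 1 (Mi a b kk)) \<and> deadK a b c n (Mi a b kk))))"

lemma set_triple: "set (concat (map (\<lambda>m1. concat (map (\<lambda>m2. map (\<lambda>m3. (m1,m2,m3)) zs) ys)) xs))
   = set xs \<times> set ys \<times> set zs"
  by auto

lemma cands_complete:
  assumes "0 < q" "m \<notin> set (cands q c z)" shows "outside c (subs q z m)"
proof -
  obtain c1 c2 c3 where c: "c = (c1,c2,c3)" by (cases c) auto
  obtain i j l where z: "z = (i,j,l)" by (cases z) auto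
  obtain m1 m2 m3 where m: "m = (m1,m2,m3)" by (cases m) auto
  have key: "c0 < \<bar>x - q*y\<bar>" if "\<not> (\<bar>y\<bar> \<le> (\<bar>x\<bar>+c0) div q)" for x y c0 :: int
  proof -
    have m1: "(\<bar>x\<bar>+c0) mod q < q" using assms(1) by simp
    have m2: "q * ((\<bar>x\<bar>+c0) div q) + (\<bar>x\<bar>+c0) mod q = \<bar>x\<bar>+c0" by (rule mult_div_mod_eq)
    have "(\<bar>x\<bar>+c0) < q * ((\<bar>x\<bar>+c0) div q) + q" using m1 m2 by linarith
    then have "(\<bar>x\<bar>+c0) < q * ((\<bar>x\<bar>+c0) div q + 1)" by (simp add: distrib_left)
    moreover have "q * ((\<bar>x\<bar>+c0) div q + 1) \<le> q * \<bar>y\<bar>" using that assms(1) by (intro mult_left_mono) auto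
    moreover have "\<bar>q * y\<bar> = q * \<bar>y\<bar>" using assms(1) by (simp add: abs_mult)
    ultimately show ?thesis by linarith
  qed
  have "\<not> (\<bar>m1\<bar> \<le> (\<bar>i\<bar>+c1) div q) \<or> \<not> (\<bar>m2\<bar> \<le> (\<bar>j\<bar>+c2) div q) \<or> \<not> (\<bar>m3\<bar> \<le> (\<bar>l\<bar>+c3) div q)"
  proof (rule ccontr)
    assume "\<not> ?thesis"
    then have "m \<in> set (cands q c z)" unfolding cands_def c z m by (simp add: image_iff abs_le_iff)
    then show False using assms(2) by simp
  qed
  then show ?thesis using key unfolding outside_def subs_def c z m by auto
qed

lemma boxL_complete: assumes "\<not> outside c k" shows "k \<in> set (boxL c)"
proof -
  obtain c1 c2 c3 where c: "c = (c1,c2,c3)" by (cases c) auto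
  obtain i j l where k: "k = (i,j,l)" by (cases k) auto
  have "i \<in> {-c1..c1}" "j \<in> {-c2..c2}" "l \<in> {-c3..c3}" using assms by (auto simp: outside_def c k)
  then show ?thesis unfolding c k boxL_def by (simp add: image_iff)
qed

context twdb begin

lemma wit_sound: assumes "witOK a b kk h xs z" shows "toV (2*h) z \<in> Bset TT (toV 1 kk)"
proof -
  have h: "0 < h" "closedL a b h xs" "z \<in> set xs" "subs (2*h) z kk \<in> set xs" using assms by (auto simp: witOK_def)
  have "toV (2*h) z \<in> TT" using closedL_sound h by blast
  moreover have "toV (2*h) z - toV 1 kk \<in> TT" using toV_subs[of "2*h" z kk] h closedL_sound[OF h(1,2,4)] by simp
  ultimately show ?thesis by (simp add: Bset_iff)
qed

lemma face_int:
  assumes w: "witOK a b kk h xs z" and c: "cok (2*h) c" and kk: "kk \<noteq> (0,0,0)"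
    and chk: "checkFace a b h c n z kk"
  shows "is_face TT (toV 1 kk)"
proof (rule face_crit)
  show "toV 1 kk \<noteq> 0" using kk toV_zero by blast
  show x: "toV (2*h) z \<in> Bset TT (toV 1 kk)" by (rule wit_sound[OF w])
  have h: "0 < h" using w by (simp add: witOK_def)
  show "\<forall>m\<in>lattice3. m \<noteq> 0 \<longrightarrow> m \<noteq> toV 1 kk \<longrightarrow> toV (2*h) z - m \<notin> TT"
  proof (intro ballI impI)
    fix m assume m: "m \<in> lattice3" "m \<noteq> 0" "m \<noteq> toV 1 kk"
    then obtain mm where mm: "m = toV 1 mm" using lattice_toV by blast
    have e: "toV (2*h) z - m = toV (2*h) (subs (2*h) z mm)" using toV_subs[of "2*h" z mm] h mm by simp
    show "toV (2*h) z - m \<notin> TT"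
    proof (cases "mm \<in> set (cands (2*h) c z)")
      case True
      moreover have "mm \<noteq> (0,0,0)" "mm \<noteq> kk" using m mm toV_zero by auto
      ultimately have "dead a b h c n (subs (2*h) z mm)" using chk by (auto simp: checkFace_def)
      then show ?thesis unfolding e using dead_sound[OF h c] by blast
    next
      case False
      then have "outside c (subs (2*h) z mm)" using cands_complete h by simp
      then show ?thesis unfolding e using outside_not c h by simp
    qed
  qed
qed

lemma nb_sub: assumes c: "cok 2 c" and chk: "nbCheck a b c n NB"
  shows "neighbors TT \<subseteq> toV 1 ` set NB"
proof
  fix k assume k: "k \<in> neighbors TT"
  then have "k \<in> lattice3" by (simp add: neighbors_def)
  then obtain kk where kk: "k = toV 1 kk" using lattice_toV by blast
  have nz: "kk \<noteq> (0,0,0)" using k kk toV_zero by (auto simp: neighbors_def)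
  have ne: "Bset TT (toV 1 kk) \<noteq> {}" using k kk by (auto simp: neighbors_def)
  then have "\<not> outside c kk" using outsideK_empty[OF c] by blast
  then have "kk \<in> set (boxL c)" by (rule boxL_complete)
  then have "kk \<in> set NB \<or> deadK a b c n kk" using chk nz by (auto simp: nbCheck_def)
  then have "kk \<in> set NB" using deadK_sound[OF c _ nz] ne by blast
  then show "k \<in> toV 1 ` set NB" using kk by blast
qed

lemma nb_mem: assumes "witOK a b kk h xs z" "kk \<noteq> (0,0,0)" shows "toV 1 kk \<in> neighbors TT"
  using wit_sound[OF assms(1)] assms(2) toV_zero toV_lattice by (auto simp: neighbors_def)

lemma sg_unique: assumes c: "cok 2 c" and chk: "sgCheck a b c n SL" and kk: "kk \<in> set SL"
  and y: "y \<in> Bset TT (toV 1 kk)" "y' \<in> Bset TT (toV 1 kk)"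
  shows "y = y'"
proof (rule single_path[where S = "toV 1 ` set SL"])
  show "toV 1 kk \<in> toV 1 ` set SL" using kk by blast
  show "y \<in> Bset TT (toV 1 kk)" "y' \<in> Bset TT (toV 1 kk)" by fact+
next
  fix k y y' assume k: "k \<in> toV 1 ` set SL" and y: "y \<in> Bset TT k" "y' \<in> Bset TT k"
  then obtain kk where kk: "kk \<in> set SL" "k = toV 1 kk" by blast
  have nz: "kk \<noteq> (0,0,0)" using chk kk by (auto simp: sgCheck_def)
  have nz1: "sh 1 (Mi a b kk) \<noteq> (0,0,0)" "sh (-1) (Mi a b kk) \<noteq> (0,0,0)"
    using nz by (cases kk, simp add: Mi_def sh_def, presburger)+
  have nz1': "Mi a b kk \<noteq> (0,0,0)" using nz Mi_zero by blast
  note nz1 = nz1 nz1'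
  from chk kk have alt: "(sh 1 (Mi a b kk) \<in> set SL \<and> deadK a b c n (sh (-1) (Mi a b kk)) \<and> deadK a b c n (Mi a b kk)) \<or>
      (sh (-1) (Mi a b kk) \<in> set SL \<and> deadK a b c n (sh 1 (Mi a b kk)) \<and> deadK a b c n (Mi a b kk))"
    by (auto simp: sgCheck_def)
  then show "\<exists>k'\<in>toV 1 ` set SL. \<exists>s. Mm a b y + s \<in> Bset TT k' \<and> Mm a b y' + s \<in> Bset TT k'"
  proof
    assume h: "sh 1 (Mi a b kk) \<in> set SL \<and> deadK a b c n (sh (-1) (Mi a b kk)) \<and> deadK a b c n (Mi a b kk)"
    then have e: "Bset TT (toV 1 (sh (-1) (Mi a b kk))) = {}" "Bset TT (toV 1 (Mi a b kk)) = {}"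
      using deadK_sound[OF c, of n "sh (-1) (Mi a b kk)"] deadK_sound[OF c, of n "Mi a b kk"] nz1 by auto
    have g1: "y \<in> Bset TT (toV 1 kk)" "y' \<in> Bset TT (toV 1 kk)" using y kk by auto
    have "Mm a b y + hv \<in> Bset TT (toV 1 (sh 1 (Mi a b kk)))" using GD_int[OF g1(1)] e by blast
    moreover have "Mm a b y' + hv \<in> Bset TT (toV 1 (sh 1 (Mi a b kk)))" using GD_int[OF g1(2)] e by blast
    ultimately show ?thesis using h by blast
  next
    assume h: "sh (-1) (Mi a b kk) \<in> set SL \<and> deadK a b c n (sh 1 (Mi a b kk)) \<and> deadK a b c n (Mi a b kk)"
    then have e: "Bset TT (toV 1 (sh 1 (Mi a b kk))) = {}" "Bset TT (toV 1 (Mi a b kk)) = {}"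
      using deadK_sound[OF c, of n "sh 1 (Mi a b kk)"] deadK_sound[OF c, of n "Mi a b kk"] nz1 by auto
    have g1: "y \<in> Bset TT (toV 1 kk)" "y' \<in> Bset TT (toV 1 kk)" using y kk by auto
    have "Mm a b y + - hv \<in> Bset TT (toV 1 (sh (-1) (Mi a b kk)))" using GD_int[OF g1(1)] e by simp
    moreover have "Mm a b y' + - hv \<in> Bset TT (toV 1 (sh (-1) (Mi a b kk)))" using GD_int[OF g1(2)] e by simp
    ultimately show ?thesis using h by blast
  qed
qed

lemma sg_point: assumes c: "cok 2 c" and chk: "sgCheck a b c n SL" and kk: "kk \<in> set SL"
  and w: "witOK a b kk h xs z"
  shows "point_neighbor TT (toV 1 kk)"
proof -
  have x: "toV (2*h) z \<in> Bset TT (toV 1 kk)" by (rule wit_sound[OF w])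
  have "Bset TT (toV 1 kk) = {toV (2*h) z}" using sg_unique[OF c chk kk _ x] x by blast
  moreover have "toV 1 kk \<noteq> 0" using chk kk toV_zero by (auto simp: sgCheck_def)
  ultimately show ?thesis unfolding point_neighbor_def by blast
qed

lemma sg_finite: assumes c: "cok 2 c" and chk: "sgCheck a b c n SL" and kk: "kk \<in> set SL"
  shows "finite (Bset TT (toV 1 kk))"
proof (cases "Bset TT (toV 1 kk) = {}")
  case False
  then obtain x where x: "x \<in> Bset TT (toV 1 kk)" by blast
  then have "Bset TT (toV 1 kk) = {x}" using sg_unique[OF c chk kk _ x] by blast
  then show ?thesis by simp
qed simp

lemma two_points: assumes "witOK a b kk h xs z1" "witOK a b kk h xs z2" "z1 \<noteq> z2"
  shows "\<not> point_neighbor TT (toV 1 kk)"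
proof
  assume "point_neighbor TT (toV 1 kk)"
  then obtain x where "Bset TT (toV 1 kk) = {x}" unfolding point_neighbor_def by blast
  moreover have "toV (2*h) z1 \<in> Bset TT (toV 1 kk)" "toV (2*h) z2 \<in> Bset TT (toV 1 kk)"
    using wit_sound assms by blast+
  moreover have "toV (2*h) z1 \<noteq> toV (2*h) z2" using assms toV_inj[of "2*h"] by (auto simp: witOK_def)
  ultimately show False by auto
qed

lemma two_card: assumes "witOK a b kk h xs z1" "witOK a b kk h xs z2" "z1 \<noteq> z2" "finite (Bset TT (toV 1 kk))"
  shows "2 \<le> card (Bset TT (toV 1 kk))"
proof -
  have "toV (2*h) z1 \<in> Bset TT (toV 1 kk)" "toV (2*h) z2 \<in> Bset TT (toV 1 kk)"
    using wit_sound assms by blast+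
  moreover have "toV (2*h) z1 \<noteq> toV (2*h) z2" using assms toV_inj[of "2*h"] by (auto simp: witOK_def)
  ultimately have "card {toV (2*h) z1, toV (2*h) z2} \<le> card (Bset TT (toV 1 kk))"
    using assms(4) by (intro card_mono) auto
  then show ?thesis using \<open>toV (2*h) z1 \<noteq> toV (2*h) z2\<close> by simp
qed

lemma fin_step: assumes c: "cok 2 c" and nz: "kk \<noteq> (0,0,0)"
  and t: "\<And>t. t \<in> {sh 1 (Mi a b kk), Mi a b kk, sh (-1) (Mi a b kk)} \<Longrightarrow>
            deadK a b c n t \<or> finite (Bset TT (toV 1 t))"
  shows "finite (Bset TT (toV 1 kk))"
proof -
  have nz1: "sh 1 (Mi a b kk) \<noteq> (0,0,0)" "sh (-1) (Mi a b kk) \<noteq> (0,0,0)"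
    using nz by (cases kk, simp add: Mi_def sh_def, presburger)+
  have nz1': "Mi a b kk \<noteq> (0,0,0)" using nz Mi_zero by blast
  note nz1 = nz1 nz1'
  have fin: "finite (Bset TT (toV 1 t))" if "t \<in> {sh 1 (Mi a b kk), Mi a b kk, sh (-1) (Mi a b kk)}" for t
  proof -
    have "t \<noteq> (0,0,0)" using that nz1 by auto
    then show ?thesis using t[OF that] deadK_sound[OF c, of n t] by auto
  qed
  let ?g1 = "\<lambda>z. L (z - hv)" and ?g2 = "\<lambda>z. L (z + hv)"
  have "Bset TT (toV 1 kk) \<subseteq> ?g1 ` Bset TT (toV 1 (sh 1 (Mi a b kk))) \<union> ?g2 ` Bset TT (toV 1 (sh (-1) (Mi a b kk)))
      \<union> ?g1 ` Bset TT (toV 1 (Mi a b kk)) \<union> ?g2 ` Bset TT (toV 1 (Mi a b kk))"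
  proof
    fix y assume y: "y \<in> Bset TT (toV 1 kk)"
    have e1: "y = ?g1 (Mm a b y + hv)" and e2: "y = ?g2 (Mm a b y - hv)" by simp_all
    from GD_int[OF y] show "y \<in> ?g1 ` Bset TT (toV 1 (sh 1 (Mi a b kk))) \<union> ?g2 ` Bset TT (toV 1 (sh (-1) (Mi a b kk)))
      \<union> ?g1 ` Bset TT (toV 1 (Mi a b kk)) \<union> ?g2 ` Bset TT (toV 1 (Mi a b kk))"
    proof (elim disjE)
      assume "Mm a b y + hv \<in> Bset TT (toV 1 (sh 1 (Mi a b kk)))"
      then have "y \<in> ?g1 ` Bset TT (toV 1 (sh 1 (Mi a b kk)))" using e1 by (rule rev_image_eqI)
      then show ?thesis by blast
    next
      assume "Mm a b y - hv \<in> Bset TT (toV 1 (sh (-1) (Mi a b kk)))"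
      then have "y \<in> ?g2 ` Bset TT (toV 1 (sh (-1) (Mi a b kk)))" using e2 by (rule rev_image_eqI)
      then show ?thesis by blast
    next
      assume "Mm a b y + hv \<in> Bset TT (toV 1 (Mi a b kk))"
      then have "y \<in> ?g1 ` Bset TT (toV 1 (Mi a b kk))" using e1 by (rule rev_image_eqI)
      then show ?thesis by blast
    next
      assume "Mm a b y - hv \<in> Bset TT (toV 1 (Mi a b kk))"
      then have "y \<in> ?g2 ` Bset TT (toV 1 (Mi a b kk))" using e2 by (rule rev_image_eqI)
      then show ?thesis by blast
    qed
  qed
  moreover have "finite (?g1 ` Bset TT (toV 1 (sh 1 (Mi a b kk))) \<union> ?g2 ` Bset TT (toV 1 (sh (-1) (Mi a b kk)))
      \<union> ?g1 ` Bset TT (toV 1 (Mi a b kk)) \<union> ?g2 ` Bset TT (toV 1 (Mi a b kk)))"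
    using fin by auto
  ultimately show ?thesis by (rule finite_subset)
qed

end

lemma vec3_basis: "vec3 x y z = x *\<^sub>R vec3 1 0 0 + y *\<^sub>R vec3 0 1 0 + z *\<^sub>R vec3 0 0 1"
  by simp

lemma Lpow_expand: "(Lm a b ^^ n) (vec3 x y z) =
   x *\<^sub>R (Lm a b ^^ n) (vec3 1 0 0) + y *\<^sub>R (Lm a b ^^ n) (vec3 0 1 0) + z *\<^sub>R (Lm a b ^^ n) (vec3 0 0 1)"
  by (subst (1) vec3_basis) (simp only: Lm_pow_add Lm_pow_scale)

lemma Lpow_comp: "(Lm a b ^^ n) v $ l = v$1 * (Lm a b ^^ n) (vec3 1 0 0) $ l + v$2 * (Lm a b ^^ n) (vec3 0 1 0) $ l
   + v$3 * (Lm a b ^^ n) (vec3 0 0 1) $ l"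
proof -
  have e: "(Lm a b ^^ n) (vec3 (v$1) (v$2) (v$3)) = v$1 *\<^sub>R (Lm a b ^^ n) (vec3 1 0 0) + v$2 *\<^sub>R (Lm a b ^^ n) (vec3 0 1 0)
      + v$3 *\<^sub>R (Lm a b ^^ n) (vec3 0 0 1)" by (rule Lpow_expand)
  show ?thesis by (subst (1) vec3_eta[of v]) (simp only: e vector_add_component vector_scaleR_component real_scaleR_def)
qed

lemma abs_comb: "\<bar>x1 * c1 + x2 * c2 + x3 * c3\<bar> \<le> \<bar>c1\<bar> * \<bar>x1\<bar> + \<bar>c2\<bar> * \<bar>x2\<bar> + \<bar>c3\<bar> * \<bar>x3\<bar>" for x1 x2 x3 c1 c2 c3 :: real
  by (simp add: abs_mult abs_triangle_ineq order_trans[OF abs_triangle_ineq] add_mono mult.commute)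

lemma abs_comb_le: "\<bar>x1\<bar> \<le> B1 \<Longrightarrow> \<bar>x2\<bar> \<le> B2 \<Longrightarrow> \<bar>x3\<bar> \<le> B3 \<Longrightarrow>
   \<bar>x1 * c1 + x2 * c2 + x3 * c3\<bar> \<le> \<bar>c1\<bar> * B1 + \<bar>c2\<bar> * B2 + \<bar>c3\<bar> * B3" for x1 x2 x3 c1 c2 c3 :: real
  by (rule order_trans[OF abs_comb]) (intro add_mono mult_left_mono; simp)

lemma contr_vec3:
  assumes "nI ((Lm a b ^^ p) (vec3 1 0 0)) \<le> 1/2" "nI ((Lm a b ^^ p) (vec3 0 1 0)) \<le> 1/2"
    "nI ((Lm a b ^^ p) (vec3 0 0 1)) \<le> 1/2"
  shows "nI ((Lm a b ^^ p) (vec3 x1 x2 x3)) \<le> nI (vec3 x1 x2 x3) / 2"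
proof -
  let ?c1 = "(Lm a b ^^ p) (vec3 1 0 0)" and ?c2 = "(Lm a b ^^ p) (vec3 0 1 0)" and ?c3 = "(Lm a b ^^ p) (vec3 0 0 1)"
  have t1: "nI (x1 *\<^sub>R ?c1 + x2 *\<^sub>R ?c2 + x3 *\<^sub>R ?c3) \<le> nI (x1 *\<^sub>R ?c1 + x2 *\<^sub>R ?c2) + nI (x3 *\<^sub>R ?c3)"
    by (rule nI_triangle)
  have t2: "nI (x1 *\<^sub>R ?c1 + x2 *\<^sub>R ?c2) \<le> nI (x1 *\<^sub>R ?c1) + nI (x2 *\<^sub>R ?c2)"
    by (rule nI_triangle)
  have e: "(Lm a b ^^ p) (vec3 x1 x2 x3) = x1 *\<^sub>R ?c1 + x2 *\<^sub>R ?c2 + x3 *\<^sub>R ?c3" by (rule Lpow_expand)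
  have "nI ((Lm a b ^^ p) (vec3 x1 x2 x3)) \<le> nI (x1 *\<^sub>R ?c1) + nI (x2 *\<^sub>R ?c2) + nI (x3 *\<^sub>R ?c3)"
    unfolding e using t1 t2 by linarith
  also have "\<dots> = \<bar>x1\<bar> * nI ?c1 + \<bar>x2\<bar> * nI ?c2 + \<bar>x3\<bar> * nI ?c3" by (simp only: nI_scale)
  also have "\<dots> \<le> \<bar>x1\<bar> * (1/2) + \<bar>x2\<bar> * (1/2) + \<bar>x3\<bar> * (1/2)"
    using assms by (intro add_mono mult_left_mono) auto
  also have "\<dots> = nI (vec3 x1 x2 x3) / 2" by (simp add: nI_def)
  finally show ?thesis .
qed

lemma contr_from_cols:
  assumes "nI ((Lm a b ^^ p) (vec3 1 0 0)) \<le> 1/2" "nI ((Lm a b ^^ p) (vec3 0 1 0)) \<le> 1/2"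
    "nI ((Lm a b ^^ p) (vec3 0 0 1)) \<le> 1/2"
  shows "nI ((Lm a b ^^ p) x) \<le> nI x / 2"
  using contr_vec3[OF assms, of "x$1" "x$2" "x$3"] by (simp only: vec3_eta[symmetric])

definition polyP :: "int \<Rightarrow> int \<Rightarrow> nat \<Rightarrow> (nat \<Rightarrow> real) \<Rightarrow> (nat \<Rightarrow> real) \<Rightarrow> (nat \<Rightarrow> real) \<Rightarrow> (real^3) set" where
  "polyP a b n B1 B2 B3 = {x. \<forall>i. i < n \<longrightarrow> \<bar>(Lm a b ^^ i) x $ 1\<bar> \<le> B1 i \<and> \<bar>(Lm a b ^^ i) x $ 2\<bar> \<le> B2 i
      \<and> \<bar>(Lm a b ^^ i) x $ 3\<bar> \<le> B3 i}"

lemma bl_Lpow: "bounded_linear (Lm a b ^^ i)"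
proof (induction i)
  case 0 then show ?case by (simp add: bounded_linear_ident id_def)
next
  case (Suc i)
  have "bounded_linear (Lm a b)" unfolding Lm_def by (simp add: linear_conv_bounded_linear)
  then show ?case using Suc by (simp add: bounded_linear_compose)
qed

lemma cont_comp: "continuous_on UNIV (\<lambda>x. \<bar>(Lm a b ^^ i) x $ l\<bar>)"
proof -
  have "bounded_linear (\<lambda>x. (Lm a b ^^ i) x $ l)"
    using bounded_linear_compose[OF bounded_linear_vec_nth bl_Lpow] by (simp add: o_def)
  then show ?thesis by (intro continuous_intros linear_continuous_on)
qed

lemma polyP_closed: "closed (polyP a b n B1 B2 B3)"
  unfolding polyP_def
  by (intro closed_Collect_all closed_Collect_imp closed_Collect_conj closed_Collect_le
      cont_comp continuous_on_const) simp_all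

lemma polyP_props:
  assumes n: "0 < n"
    and nn: "\<And>i. i < n \<Longrightarrow> 0 \<le> B1 i \<and> 0 \<le> B2 i \<and> 0 \<le> B3 i"
    and H1: "\<And>i. Suc i < n \<Longrightarrow> B1 (Suc i) + \<bar>(Lm a b ^^ Suc i) hv $ 1\<bar> \<le> B1 i \<and>
               B2 (Suc i) + \<bar>(Lm a b ^^ Suc i) hv $ 2\<bar> \<le> B2 i \<and> B3 (Suc i) + \<bar>(Lm a b ^^ Suc i) hv $ 3\<bar> \<le> B3 i"
    and H2: "\<And>l. l \<in> {1,2,3} \<Longrightarrow> \<bar>(Lm a b ^^ n) (vec3 1 0 0) $ l\<bar> * B1 0 + \<bar>(Lm a b ^^ n) (vec3 0 1 0) $ l\<bar> * B2 0
               + \<bar>(Lm a b ^^ n) (vec3 0 0 1) $ l\<bar> * B3 0 + \<bar>(Lm a b ^^ n) hv $ l\<bar>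
               \<le> (if l = 1 then B1 (n - 1) else if l = 2 then B2 (n - 1) else B3 (n - 1))"
  shows "compact (polyP a b n B1 B2 B3)" "polyP a b n B1 B2 B3 \<noteq> {}"
    "Fm a b (polyP a b n B1 B2 B3) \<subseteq> polyP a b n B1 B2 B3"
    "\<forall>x\<in>polyP a b n B1 B2 B3. \<bar>x$1\<bar> \<le> B1 0 \<and> \<bar>x$2\<bar> \<le> B2 0 \<and> \<bar>x$3\<bar> \<le> B3 0"
proof -
  let ?P = "polyP a b n B1 B2 B3"
  show box: "\<forall>x\<in>?P. \<bar>x$1\<bar> \<le> B1 0 \<and> \<bar>x$2\<bar> \<le> B2 0 \<and> \<bar>x$3\<bar> \<le> B3 0"
    using n unfolding polyP_def by fastforce
  have "bounded ?P"
  proof -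
    have "norm x \<le> B1 0 + B2 0 + B3 0" if "x \<in> ?P" for x
      using box that norm_le_nI[of x] unfolding nI_def by fastforce
    then have "\<forall>x\<in>?P. norm x \<le> B1 0 + B2 0 + B3 0" by blast
    then show ?thesis unfolding bounded_iff by blast
  qed
  then show "compact ?P" using polyP_closed compact_eq_bounded_closed by blast
  have "0 \<in> ?P" unfolding polyP_def using nn by (simp add: Lm_pow_scale[of _ _ _ 0, simplified])
  then show "?P \<noteq> {}" by blast
  have inv: "Lm a b (x + s) \<in> ?P" if x: "x \<in> ?P" and s: "s = hv \<or> s = - hv" for x s
  proof -
    have expand: "(Lm a b ^^ i) (Lm a b (x + s)) = (Lm a b ^^ Suc i) x + (Lm a b ^^ Suc i) s" for i
      by (simp add: funpow_swap1 Lm_pow_add[symmetric] Lm_add)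
    have ss: "\<bar>(Lm a b ^^ j) s $ l\<bar> = \<bar>(Lm a b ^^ j) hv $ l\<bar>" for j l
      using s by (auto simp: Lm_pow_scale[of _ _ _ "-1", simplified])
    show ?thesis unfolding polyP_def
    proof (intro CollectI allI impI)
      fix i assume i: "i < n"
      show "\<bar>(Lm a b ^^ i) (Lm a b (x + s)) $ 1\<bar> \<le> B1 i \<and> \<bar>(Lm a b ^^ i) (Lm a b (x + s)) $ 2\<bar> \<le> B2 i
          \<and> \<bar>(Lm a b ^^ i) (Lm a b (x + s)) $ 3\<bar> \<le> B3 i"
      proof (cases "Suc i < n")
        case True
        have xs: "\<bar>(Lm a b ^^ Suc i) x $ 1\<bar> \<le> B1 (Suc i)" "\<bar>(Lm a b ^^ Suc i) x $ 2\<bar> \<le> B2 (Suc i)"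
          "\<bar>(Lm a b ^^ Suc i) x $ 3\<bar> \<le> B3 (Suc i)" using x True unfolding polyP_def by blast+
        have t: "\<bar>u $ l + v $ l\<bar> \<le> \<bar>u $ l\<bar> + \<bar>v $ l\<bar>" for u v :: "real^3" and l
          by (rule abs_triangle_ineq)
        show ?thesis unfolding expand vector_add_component using H1[OF True] xs ss[of "Suc i"]
          t[where u="(Lm a b ^^ Suc i) x" and v="(Lm a b ^^ Suc i) s"] by (smt (verit))
      next
        case False
        then have ni: "Suc i = n" using i by simp
        have x0: "\<bar>x$1\<bar> \<le> B1 0" "\<bar>x$2\<bar> \<le> B2 0" "\<bar>x$3\<bar> \<le> B3 0" using box x by auto
        have cl: "\<bar>(Lm a b ^^ n) x $ l\<bar> \<le> \<bar>(Lm a b ^^ n) (vec3 1 0 0) $ l\<bar> * B1 0 + \<bar>(Lm a b ^^ n) (vec3 0 1 0) $ l\<bar> * B2 0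
               + \<bar>(Lm a b ^^ n) (vec3 0 0 1) $ l\<bar> * B3 0" for l
        proof -
          have e: "(Lm a b ^^ n) x $ l = x$1 * (Lm a b ^^ n) (vec3 1 0 0) $ l + x$2 * (Lm a b ^^ n) (vec3 0 1 0) $ l
             + x$3 * (Lm a b ^^ n) (vec3 0 0 1) $ l" by (rule Lpow_comp)
          show ?thesis unfolding e by (rule abs_comb_le[OF x0])
        qed
        have "i = n - 1" using ni by simp
        have t: "\<bar>u $ l + v $ l\<bar> \<le> \<bar>u $ l\<bar> + \<bar>v $ l\<bar>" for u v :: "real^3" and l
          by (rule abs_triangle_ineq)
        have h2: "\<bar>(Lm a b ^^ n) (vec3 1 0 0) $ 1\<bar> * B1 0 + \<bar>(Lm a b ^^ n) (vec3 0 1 0) $ 1\<bar> * B2 0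
               + \<bar>(Lm a b ^^ n) (vec3 0 0 1) $ 1\<bar> * B3 0 + \<bar>(Lm a b ^^ n) hv $ 1\<bar> \<le> B1 i"
           "\<bar>(Lm a b ^^ n) (vec3 1 0 0) $ 2\<bar> * B1 0 + \<bar>(Lm a b ^^ n) (vec3 0 1 0) $ 2\<bar> * B2 0
               + \<bar>(Lm a b ^^ n) (vec3 0 0 1) $ 2\<bar> * B3 0 + \<bar>(Lm a b ^^ n) hv $ 2\<bar> \<le> B2 i"
           "\<bar>(Lm a b ^^ n) (vec3 1 0 0) $ 3\<bar> * B1 0 + \<bar>(Lm a b ^^ n) (vec3 0 1 0) $ 3\<bar> * B2 0
               + \<bar>(Lm a b ^^ n) (vec3 0 0 1) $ 3\<bar> * B3 0 + \<bar>(Lm a b ^^ n) hv $ 3\<bar> \<le> B3 i"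
          using H2[of 1] H2[of 2] H2[of 3] \<open>i = n - 1\<close> by simp_all
        show ?thesis unfolding expand ni vector_add_component using h2 cl[of 1] cl[of 2] cl[of 3] ss[of n]
          t[where u="(Lm a b ^^ n) x" and v="(Lm a b ^^ n) s"] by (smt (verit))
      qed
    qed
  qed
  show "Fm a b ?P \<subseteq> ?P"
  proof
    fix y assume "y \<in> Fm a b ?P"
    then obtain x where x: "x \<in> ?P" "y = f1 a b x \<or> y = f2 a b x" unfolding Fm_def by blast
    then show "y \<in> ?P" using inv[of x "- hv"] inv[of x hv] by (auto simp: f1_Lm f2_Lm)
  qed
qed

lemma card_toV: "distinct L \<Longrightarrow> card (toV 1 ` set L) = length L"
proof -
  assume d: "distinct L"
  have "inj_on (toV 1) (set L)" by (auto simp: inj_on_def toV_inj)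
  then show ?thesis using d by (simp add: card_image distinct_card)
qed

context twdb begin

lemma assemble:
  fixes NB SL FL FN :: "i3 list" and WS :: "(i3 \<times> int \<times> i3 list \<times> i3) list"
    and WF :: "(i3 \<times> i3 list \<times> i3 \<times> i3) list" and WN :: "(i3 \<times> int \<times> i3 list \<times> i3 \<times> i3) list"
  assumes c2: "cok 2 c" and cf: "cok (2*hf) cf"
    and nb: "nbCheck a b c n NB"
    and sg: "sgCheck a b c n SL"
    and ws: "\<forall>(kk,h,xs,z)\<in>set WS. witOK a b kk h xs z" and wsl: "SL = map fst WS"
    and wf: "\<forall>(kk,xs,z1,z2)\<in>set WF. witOK a b kk hf xs z1 \<and> witOK a b kk hf xs z2 \<and> z1 \<noteq> z2 \<and> kk \<noteq> (0,0,0)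
              \<and> checkFace a b hf cf fn z1 kk" and wfl: "FL = map fst WF"
    and wn: "\<forall>(kk,h,xs,z1,z2)\<in>set WN. witOK a b kk h xs z1 \<and> witOK a b kk h xs z2 \<and> z1 \<noteq> z2 \<and> kk \<noteq> (0,0,0)"
    and wnl: "FN = map fst WN"
    and fin: "\<forall>kk\<in>set FN. finite (Bset TT (toV 1 kk))"
    and part: "set NB = set SL \<union> set FL \<union> set FN"
  shows "neighbors TT = toV 1 ` set NB"
    "{k \<in> neighbors TT. is_face TT k} = toV 1 ` set FL"
    "{k \<in> neighbors TT. point_neighbor TT k} = toV 1 ` set SL"
    "{k \<in> neighbors TT. \<not> is_face TT k \<and> \<not> point_neighbor TT k} = toV 1 ` set FN"
proof -
  have S: "toV 1 kk \<in> neighbors TT \<and> point_neighbor TT (toV 1 kk) \<and> \<not> is_face TT (toV 1 kk)"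
    if kk: "kk \<in> set SL" for kk
  proof -
    obtain h xs z where w: "(kk,h,xs,z) \<in> set WS" using kk wsl by auto
    then have wo: "witOK a b kk h xs z" using ws by auto
    have nz: "kk \<noteq> (0,0,0)" using sg kk by (auto simp: sgCheck_def)
    show ?thesis using nb_mem[OF wo nz] sg_point[OF c2 sg kk wo] nonface_crit sg_finite[OF c2 sg kk] by blast
  qed
  have F: "toV 1 kk \<in> neighbors TT \<and> \<not> point_neighbor TT (toV 1 kk) \<and> is_face TT (toV 1 kk)"
    if kk: "kk \<in> set FL" for kk
  proof -
    obtain xs z1 z2 where w: "(kk,xs,z1,z2) \<in> set WF" using kk wfl by auto
    then have wo: "witOK a b kk hf xs z1" "witOK a b kk hf xs z2" "z1 \<noteq> z2" "kk \<noteq> (0,0,0)"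
      "checkFace a b hf cf fn z1 kk" using wf by auto
    show ?thesis using nb_mem[OF wo(1,4)] two_points[OF wo(1-3)] face_int[OF wo(1) cf wo(4,5)] by blast
  qed
  have N: "toV 1 kk \<in> neighbors TT \<and> \<not> point_neighbor TT (toV 1 kk) \<and> \<not> is_face TT (toV 1 kk)"
    if kk: "kk \<in> set FN" for kk
  proof -
    obtain h xs z1 z2 where w: "(kk,h,xs,z1,z2) \<in> set WN" using kk wnl by auto
    then have wo: "witOK a b kk h xs z1" "witOK a b kk h xs z2" "z1 \<noteq> z2" "kk \<noteq> (0,0,0)"
      using wn by auto
    show ?thesis using nb_mem[OF wo(1,4)] two_points[OF wo(1-3)] nonface_crit fin kk by blast
  qed
  have sub: "neighbors TT \<subseteq> toV 1 ` set NB" by (rule nb_sub[OF c2 nb])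
  have cls: "kk \<in> set SL \<or> kk \<in> set FL \<or> kk \<in> set FN" if "k \<in> neighbors TT" "k = toV 1 kk" "kk \<in> set NB" for k kk
    using that part by blast
  have get: "\<exists>kk. k = toV 1 kk \<and> (kk \<in> set SL \<or> kk \<in> set FL \<or> kk \<in> set FN)" if kn: "k \<in> neighbors TT" for k
  proof -
    obtain kk where "kk \<in> set NB" "k = toV 1 kk" using sub kn by blast
    then show ?thesis using part by blast
  qed
  show "neighbors TT = toV 1 ` set NB"
  proof
    show "toV 1 ` set NB \<subseteq> neighbors TT"
    proof
      fix k assume "k \<in> toV 1 ` set NB"
      then obtain kk where kk: "kk \<in> set NB" "k = toV 1 kk" by blast
      then have "kk \<in> set SL \<or> kk \<in> set FL \<or> kk \<in> set FN" using part by blast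
      then show "k \<in> neighbors TT" using S F N kk(2) by blast
    qed
  qed (rule sub)
  show "{k \<in> neighbors TT. is_face TT k} = toV 1 ` set FL"
  proof
    show "{k \<in> neighbors TT. is_face TT k} \<subseteq> toV 1 ` set FL"
    proof
      fix k assume k: "k \<in> {k \<in> neighbors TT. is_face TT k}"
      then obtain kk where kk: "k = toV 1 kk" "kk \<in> set SL \<or> kk \<in> set FL \<or> kk \<in> set FN" using get by blast
      then have "kk \<in> set FL" using S N k by blast
      then show "k \<in> toV 1 ` set FL" using kk by blast
    qed
    show "toV 1 ` set FL \<subseteq> {k \<in> neighbors TT. is_face TT k}" using F by blast
  qed
  show "{k \<in> neighbors TT. point_neighbor TT k} = toV 1 ` set SL"
  proof
    show "{k \<in> neighbors TT. point_neighbor TT k} \<subseteq> toV 1 ` set SL"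
    proof
      fix k assume k: "k \<in> {k \<in> neighbors TT. point_neighbor TT k}"
      then obtain kk where kk: "k = toV 1 kk" "kk \<in> set SL \<or> kk \<in> set FL \<or> kk \<in> set FN" using get by blast
      then have "kk \<in> set SL" using F N k by blast
      then show "k \<in> toV 1 ` set SL" using kk by blast
    qed
    show "toV 1 ` set SL \<subseteq> {k \<in> neighbors TT. point_neighbor TT k}" using S by blast
  qed
  show "{k \<in> neighbors TT. \<not> is_face TT k \<and> \<not> point_neighbor TT k} = toV 1 ` set FN"
  proof
    show "{k \<in> neighbors TT. \<not> is_face TT k \<and> \<not> point_neighbor TT k} \<subseteq> toV 1 ` set FN"
    proof
      fix k assume k: "k \<in> {k \<in> neighbors TT. \<not> is_face TT k \<and> \<not> point_neighbor TT k}"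
      then obtain kk where kk: "k = toV 1 kk" "kk \<in> set SL \<or> kk \<in> set FL \<or> kk \<in> set FN" using get by blast
      then have "kk \<in> set FN" using F S k by blast
      then show "k \<in> toV 1 ` set FN" using kk by blast
    qed
    show "toV 1 ` set FN \<subseteq> {k \<in> neighbors TT. \<not> is_face TT k \<and> \<not> point_neighbor TT k}" using N by blast
  qed
qed

end

definition "B1C (i::nat) = ((if i = 0 then (127/100) else (if i = 1 then (51/50) else (if i = 2 then (89/100) else (if i = 3 then (41/50) else (if i = 4 then (3/5) else (if i = 5 then (29/50) else (if i = 6 then (1/2) else (if i = 7 then (43/100) else (if i = 8 then (7/20) else (if i = 9 then (31/100) else (7/25))))))))))) :: real)"
definition "B2C (i::nat) = ((if i = 0 then (123/100) else (if i = 1 then (49/50) else (if i = 2 then (17/20) else (if i = 3 then (33/50) else (if i = 4 then (14/25) else (if i = 5 then (12/25) else (if i = 6 then (37/100) else (if i = 7 then (8/25) else (if i = 8 then (1/4) else (if i = 9 then (6/25) else (9/50))))))))))) :: real)"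
definition "B3C (i::nat) = ((if i = 0 then (91/100) else (if i = 1 then (33/50) else (if i = 2 then (53/100) else (if i = 3 then (23/50) else (if i = 4 then (21/50) else (if i = 5 then (31/100) else (if i = 6 then (3/10) else (if i = 7 then (13/50) else (if i = 8 then (11/50) else (if i = 9 then (9/50) else (4/25))))))))))) :: real)"
lemma C_nn: "i < 11 \<Longrightarrow> 0 \<le> B1C i \<and> 0 \<le> B2C i \<and> 0 \<le> B3C i"
  by (simp add: B1C_def B2C_def B3C_def)
lemma C_H1: assumes "Suc i < 11" shows "B1C (Suc i) + \<bar>(Lm 1 (-1) ^^ Suc i) hv $ 1\<bar> \<le> B1C i \<and>
   B2C (Suc i) + \<bar>(Lm 1 (-1) ^^ Suc i) hv $ 2\<bar> \<le> B2C i \<and> B3C (Suc i) + \<bar>(Lm 1 (-1) ^^ Suc i) hv $ 3\<bar> \<le> B3C i"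
proof -
  show ?thesis using assms by (auto simp: less_Suc_eq B1C_def B2C_def B3C_def numeral_eq_Suc Lm_vec3 hv_def)
qed
lemma C_H2: "l \<in> {1,2,3} \<Longrightarrow> \<bar>(Lm 1 (-1) ^^ 11) (vec3 1 0 0) $ l\<bar> * B1C 0 + \<bar>(Lm 1 (-1) ^^ 11) (vec3 0 1 0) $ l\<bar> * B2C 0
               + \<bar>(Lm 1 (-1) ^^ 11) (vec3 0 0 1) $ l\<bar> * B3C 0 + \<bar>(Lm 1 (-1) ^^ 11) hv $ l\<bar>
               \<le> (if l = 1 then B1C (11 - 1) else if l = 2 then B2C (11 - 1) else B3C (11 - 1))"
  by (auto simp: B1C_def B2C_def B3C_def numeral_eq_Suc Lm_vec3 hv_def)
lemma C_poly: "compact (polyP 1 (-1) 11 B1C B2C B3C)" "polyP 1 (-1) 11 B1C B2C B3C \<noteq> {}"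
    "Fm 1 (-1) (polyP 1 (-1) 11 B1C B2C B3C) \<subseteq> polyP 1 (-1) 11 B1C B2C B3C"
    "\<forall>x\<in>polyP 1 (-1) 11 B1C B2C B3C. \<bar>x$1\<bar> \<le> B1C 0 \<and> \<bar>x$2\<bar> \<le> B2C 0 \<and> \<bar>x$3\<bar> \<le> B3C 0"
  by (rule polyP_props[OF _ C_nn C_H1 C_H2]; simp)+

lemma C_contr: "nI ((Lm 1 (-1) ^^ 7) x) \<le> nI x / 2"
  by (rule contr_from_cols) (simp_all add: nI_def numeral_eq_Suc Lm_vec3)

interpretation C: twdb "1" "(-1)" 7 "polyP 1 (-1) 11 B1C B2C B3C" "B1C 0" "B2C 0" "B3C 0"
  by unfold_locales (use C_poly C_contr in auto)
lemma C_cok2: "C.cok 2 (2,2,1)" unfolding C.cok_def by (simp add: B1C_def B2C_def B3C_def)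
lemma C_cokf: "C.cok (2*2) (5,4,3)" unfolding C.cok_def by (simp add: B1C_def B2C_def B3C_def)
definition "NBC = ([(-2,1,0),(-1,0,-1),(-1,0,0),(-1,0,1),(-1,1,-1),(-1,1,0),(-1,2,-1),(0,-1,0),(0,-1,1),(0,0,-1),(0,0,1),(0,1,-1),(0,1,0),(1,-2,1),(1,-1,0),(1,-1,1),(1,0,-1),(1,0,0),(1,0,1),(2,-1,0)] :: i3 list)"
definition "SLC = ([(-2,1,0),(-1,0,-1),(-1,0,1),(-1,2,-1),(1,-2,1),(1,0,-1),(1,0,1),(2,-1,0)] :: i3 list)"
definition "FLC = ([(-1,0,0),(-1,1,-1),(-1,1,0),(0,-1,0),(0,-1,1),(0,0,-1),(0,0,1),(0,1,-1),(0,1,0),(1,-1,0),(1,-1,1),(1,0,0)] :: i3 list)"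
definition "FNC = ([] :: i3 list)"
definition "WSC = ([((-2,1,0),1,[(-2,1,0),(-1,0,1),(-1,2,-1),(1,-2,1),(1,0,-1),(2,-1,0)],(-2,1,0)),((-1,0,-1),1,[(-1,0,-1),(1,0,1)],(-1,0,-1)),((-1,0,1),1,[(-1,0,1),(-1,2,-1),(1,-2,1),(1,0,-1)],(-1,0,1)),((-1,2,-1),1,[(-1,0,1),(-1,2,-1),(1,-2,1),(1,0,-1)],(-1,2,-1)),((1,-2,1),1,[(-1,0,1),(-1,2,-1),(1,-2,1),(1,0,-1)],(1,-2,1)),((1,0,-1),1,[(-1,0,1),(-1,2,-1),(1,-2,1),(1,0,-1)],(1,0,-1)),((1,0,1),1,[(-1,0,-1),(1,0,1)],(1,0,1)),((2,-1,0),1,[(-2,1,0),(-1,0,1),(-1,2,-1),(1,-2,1),(1,0,-1),(2,-1,0)],(2,-1,0))] :: (i3 \<times> int \<times> i3 list \<times> i3) list)"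
definition "WFC = ([((-1,0,0),[(-2,0,0),(-2,0,2),(-2,2,-2),(-2,2,0),(-2,4,-2),(2,-4,2),(2,-2,0),(2,-2,2),(2,0,-2),(2,0,0),(2,0,2)],(-2,0,0),(-2,0,2)),((-1,1,-1),[(-2,0,-2),(-2,0,0),(-2,0,2),(-2,2,-2),(-2,2,0),(-2,4,-2),(2,-4,2),(2,-2,0),(2,-2,2),(2,0,-2),(2,0,0)],(-2,2,-2),(-2,0,-2)),((-1,1,0),[(-2,0,0),(-2,0,2),(-2,2,-2),(-2,2,0),(-2,4,-2),(2,-4,2),(2,-2,0),(2,-2,2),(2,0,-2),(2,0,0)],(-2,2,0),(-2,0,2)),((0,-1,0),[(-2,0,-2),(-2,0,0),(-2,0,2),(-2,2,-2),(-2,2,0),(-2,4,-2),(0,0,-2),(0,0,2),(1,-3,1),(1,1,1),(2,-4,2),(2,-2,0),(2,-2,2),(2,0,-2),(2,0,0)],(1,-3,1),(-2,0,-2)),((0,-1,1),[(-2,0,0),(-2,0,2),(-2,2,-2),(-2,2,0),(-2,4,-2),(0,-2,2),(0,2,-2),(2,-4,2),(2,-2,0),(2,-2,2),(2,0,-2),(2,0,0)],(0,-2,2),(-2,0,2)),((0,0,-1),[(-2,0,-2),(-2,0,0),(-2,0,2),(-2,2,-2),(-2,2,0),(-2,4,-2),(0,0,-2),(0,0,2),(2,-4,2),(2,-2,0),(2,-2,2),(2,0,-2),(2,0,0)],(0,0,-2),(-2,0,-2)),((0,0,1),[(-2,0,-2),(-2,0,0),(-2,0,2),(-2,2,-2)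,(-2,2,0),(-2,4,-2),(0,0,-2),(0,0,2),(2,-4,2),(2,-2,0),(2,-2,2),(2,0,-2),(2,0,0)],(0,0,2),(-2,0,2)),((0,1,-1),[(-2,0,0),(-2,0,2),(-2,2,-2),(-2,2,0),(-2,4,-2),(0,-2,2),(0,2,-2),(2,-4,2),(2,-2,0),(2,-2,2),(2,0,-2),(2,0,0)],(0,2,-2),(2,0,-2)),((0,1,0),[(-2,0,-2),(-2,0,0),(-2,0,2),(-2,2,-2),(-2,2,0),(-2,4,-2),(-1,-1,-1),(-1,3,-1),(0,-2,0),(0,0,-2),(0,0,2),(0,2,0),(2,-4,2),(2,-2,0),(2,-2,2),(2,0,-2),(2,0,0),(2,0,2)],(-1,3,-1),(0,2,0)),((1,-1,0),[(-2,0,0),(-2,0,2),(-2,2,-2),(-2,2,0),(-2,4,-2),(2,-4,2),(2,-2,0),(2,-2,2),(2,0,-2),(2,0,0)],(2,-2,0),(2,-4,2)),((1,-1,1),[(-2,0,-2),(-2,0,0),(-2,0,2),(-2,2,-2),(-2,2,0),(-2,4,-2),(2,-4,2),(2,-2,0),(2,-2,2),(2,0,-2),(2,0,0)],(2,-2,2),(2,-4,2)),((1,0,0),[(-4,2,0),(-2,0,0),(-2,0,2),(-2,2,-2),(-2,2,0),(-2,4,-2),(0,2,0),(2,-4,2),(2,-2,0),(2,-2,2),(2,0,-2),(2,0,0),(2,0,2)],(2,0,0),(0,2,0))] :: (i3 \<times> i3 list \<times> i3 \<times> i3) list)"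
definition "WNC = ([] :: (i3 \<times> int \<times> i3 list \<times> i3 \<times> i3) list)"

lemma C_nb: "nbCheck 1 (-1) (2,2,1) 3 NBC" unfolding NBC_def by code_simp
lemma C_sg: "sgCheck 1 (-1) (2,2,1) 3 SLC" unfolding SLC_def by code_simp
lemma C_ws: "\<forall>(kk,h,xs,z)\<in>set WSC. witOK 1 (-1) kk h xs z" unfolding WSC_def by code_simp
lemma C_wsl: "SLC = map fst WSC" unfolding SLC_def WSC_def by code_simp
lemma C_wf: "\<forall>(kk,xs,z1,z2)\<in>set WFC. witOK 1 (-1) kk 2 xs z1 \<and> witOK 1 (-1) kk 2 xs z2 \<and> z1 \<noteq> z2 \<and> kk \<noteq> (0,0,0)
              \<and> checkFace 1 (-1) 2 (5,4,3) 4 z1 kk" unfolding WFC_def by code_simp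
lemma C_wfl: "FLC = map fst WFC" unfolding FLC_def WFC_def by code_simp
lemma C_wn: "\<forall>(kk,h,xs,z1,z2)\<in>set WNC. witOK 1 (-1) kk h xs z1 \<and> witOK 1 (-1) kk h xs z2 \<and> z1 \<noteq> z2 \<and> kk \<noteq> (0,0,0)"
  unfolding WNC_def by code_simp
lemma C_wnl: "FNC = map fst WNC" unfolding FNC_def WNC_def by code_simp
lemma C_part: "set NBC = set SLC \<union> set FLC \<union> set FNC"
  unfolding NBC_def SLC_def FLC_def FNC_def by code_simp
lemma C_dist: "distinct NBC" "distinct SLC" "distinct FLC" "distinct FNC"
  unfolding NBC_def SLC_def FLC_def FNC_def by code_simp+
lemma C_fin: "\<forall>kk\<in>set FNC. finite (Bset (twindragon 1 (-1)) (toV 1 kk))"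
  by (simp add: FNC_def)
lemmas C_asm = C.assemble[OF C_cok2 C_cokf C_nb C_sg C_ws C_wsl C_wf C_wfl C_wn C_wnl C_fin C_part]

lemma C_final: "card (neighbors (twindragon 1 (-1))) = 20 \<and>
   card {k \<in> neighbors (twindragon 1 (-1)). is_face (twindragon 1 (-1)) k} = 12 \<and>
   card {k \<in> neighbors (twindragon 1 (-1)). point_neighbor (twindragon 1 (-1)) k} = 8"
proof -
  have e1: "card (neighbors (twindragon 1 (-1))) = length NBC" using C_asm(1) card_toV[OF C_dist(1)] by simp
  have e2: "card {k \<in> neighbors (twindragon 1 (-1)). is_face (twindragon 1 (-1)) k} = length FLC" using C_asm(2) card_toV[OF C_dist(3)] by simp
  have e3: "card {k \<in> neighbors (twindragon 1 (-1)). point_neighbor (twindragon 1 (-1)) k} = length SLC" using C_asm(3) card_toV[OF C_dist(2)] by simp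
  have "length NBC = 20" "length FLC = 12" "length SLC = 8" by (simp_all add: NBC_def FLC_def SLC_def)
  then show ?thesis using e1 e2 e3 by simp
qed

definition "B1B (i::nat) = ((if i = 0 then (7/5) else (if i = 1 then (23/20) else (if i = 2 then (77/100) else (if i = 3 then (7/10) else (if i = 4 then (3/5) else (if i = 5 then (49/100) else (if i = 6 then (9/20) else (if i = 7 then (8/25) else (if i = 8 then (29/100) else (if i = 9 then (23/100) else (1/5))))))))))) :: real)"
definition "B2B (i::nat) = ((if i = 0 then (6/5) else (if i = 1 then (19/20) else (if i = 2 then (41/50) else (if i = 3 then (3/4) else (if i = 4 then (59/100) else (if i = 5 then (57/100) else (if i = 6 then (23/50) else (if i = 7 then (21/50) else (if i = 8 then (37/100) else (if i = 9 then (8/25) else (3/10))))))))))) :: real)"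
definition "B3B (i::nat) = ((if i = 0 then (101/100) else (if i = 1 then (19/25) else (if i = 2 then (63/100) else (if i = 3 then (11/25) else (if i = 4 then (2/5) else (if i = 5 then (7/20) else (if i = 6 then (29/100) else (if i = 7 then (27/100) else (if i = 8 then (1/5) else (if i = 9 then (9/50) else (3/20))))))))))) :: real)"
lemma B_nn: "i < 11 \<Longrightarrow> 0 \<le> B1B i \<and> 0 \<le> B2B i \<and> 0 \<le> B3B i"
  by (simp add: B1B_def B2B_def B3B_def)
lemma B_H1: assumes "Suc i < 11" shows "B1B (Suc i) + \<bar>(Lm (-1) 1 ^^ Suc i) hv $ 1\<bar> \<le> B1B i \<and>
   B2B (Suc i) + \<bar>(Lm (-1) 1 ^^ Suc i) hv $ 2\<bar> \<le> B2B i \<and> B3B (Suc i) + \<bar>(Lm (-1) 1 ^^ Suc i) hv $ 3\<bar> \<le> B3B i"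
proof -
  show ?thesis using assms by (auto simp: less_Suc_eq B1B_def B2B_def B3B_def numeral_eq_Suc Lm_vec3 hv_def)
qed
lemma B_H2: "l \<in> {1,2,3} \<Longrightarrow> \<bar>(Lm (-1) 1 ^^ 11) (vec3 1 0 0) $ l\<bar> * B1B 0 + \<bar>(Lm (-1) 1 ^^ 11) (vec3 0 1 0) $ l\<bar> * B2B 0
               + \<bar>(Lm (-1) 1 ^^ 11) (vec3 0 0 1) $ l\<bar> * B3B 0 + \<bar>(Lm (-1) 1 ^^ 11) hv $ l\<bar>
               \<le> (if l = 1 then B1B (11 - 1) else if l = 2 then B2B (11 - 1) else B3B (11 - 1))"
  by (auto simp: B1B_def B2B_def B3B_def numeral_eq_Suc Lm_vec3 hv_def)
lemma B_poly: "compact (polyP (-1) 1 11 B1B B2B B3B)" "polyP (-1) 1 11 B1B B2B B3B \<noteq> {}"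
    "Fm (-1) 1 (polyP (-1) 1 11 B1B B2B B3B) \<subseteq> polyP (-1) 1 11 B1B B2B B3B"
    "\<forall>x\<in>polyP (-1) 1 11 B1B B2B B3B. \<bar>x$1\<bar> \<le> B1B 0 \<and> \<bar>x$2\<bar> \<le> B2B 0 \<and> \<bar>x$3\<bar> \<le> B3B 0"
  by (rule polyP_props[OF _ B_nn B_H1 B_H2]; simp)+

lemma B_contr: "nI ((Lm (-1) 1 ^^ 7) x) \<le> nI x / 2"
  by (rule contr_from_cols) (simp_all add: nI_def numeral_eq_Suc Lm_vec3)

interpretation B: twdb "(-1)" "1" 7 "polyP (-1) 1 11 B1B B2B B3B" "B1B 0" "B2B 0" "B3B 0"
  by unfold_locales (use B_poly B_contr in auto)
lemma B_cok2: "B.cok 2 (2,2,2)" unfolding B.cok_def by (simp add: B1B_def B2B_def B3B_def)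
lemma B_cokf: "B.cok (2*4) (11,9,8)" unfolding B.cok_def by (simp add: B1B_def B2B_def B3B_def)
definition "NBB = ([(-2,-1,0),(-2,0,1),(-1,-2,-1),(-1,-1,0),(-1,0,0),(-1,0,1),(-1,1,1),(0,-1,-1),(0,-1,0),(0,1,0),(0,1,1),(1,-1,-1),(1,0,-1),(1,0,0),(1,1,0),(1,2,1),(2,0,-1),(2,1,0)] :: i3 list)"
definition "SLB = ([(-2,-1,0),(-1,-2,-1),(1,2,1),(2,1,0)] :: i3 list)"
definition "FLB = ([(-2,0,1),(-1,-1,0),(-1,0,0),(-1,0,1),(-1,1,1),(0,-1,-1),(0,-1,0),(0,1,0),(0,1,1),(1,-1,-1),(1,0,-1),(1,0,0),(1,1,0),(2,0,-1)] :: i3 list)"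
definition "FNB = ([] :: i3 list)"
definition "WSB = ([((-2,-1,0),1,[(-2,-1,0),(-1,-2,-1),(1,2,1),(2,1,0)],(-2,-1,0)),((-1,-2,-1),1,[(-1,-2,-1),(1,2,1)],(-1,-2,-1)),((1,2,1),1,[(-1,-2,-1),(1,2,1)],(1,2,1)),((2,1,0),1,[(-2,-1,0),(-1,-2,-1),(1,2,1),(2,1,0)],(2,1,0))] :: (i3 \<times> int \<times> i3 list \<times> i3) list)"
definition "WFB = ([((-2,0,1),[(-8,0,4),(-7,3,5),(-4,-4,0),(-4,0,0),(-4,0,4),(-4,4,4),(-2,6,6),(0,4,0),(4,-4,-4),(4,0,-4),(4,0,0),(4,4,0),(4,8,4),(6,-2,-2),(8,0,-4),(8,4,0),(9,3,-3)],(-8,0,4),(-7,3,5)),((-1,-1,0),[(-4,-8,-4),(-4,-4,0),(-4,0,0),(-4,0,4),(-4,4,4),(4,-4,-4),(4,0,-4),(4,0,0),(4,4,0)],(-4,-4,0),(-4,-8,-4)),((-1,0,0),[(-8,-4,0),(-4,-8,-4),(-4,-4,0),(-4,0,0),(-4,0,4),(-4,4,4),(0,-4,0),(4,-4,-4),(4,0,-4),(4,0,0),(4,4,0)],(-4,0,0),(-8,-4,0)),((-1,0,1),[(-8,0,4),(-6,2,6),(-4,-4,0),(-4,0,0),(-4,0,4),(-4,4,4),(2,2,-2),(4,-4,-4),(4,0,-4),(4,0,0),(4,4,0),(8,0,-4)],(-6,2,6),(-4,0,4)),((-1,1,1),[(-4,-4,0),(-4,0,0),(-4,0,4),(-4,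4,4),(-2,6,6),(0,4,0),(4,-4,-4),(4,0,-4),(4,0,0),(4,4,0),(4,8,4),(6,-2,-2),(8,4,0)],(-4,4,4),(-2,6,6)),((0,-1,-1),[(-4,-8,-4),(-4,-4,0),(-4,0,0),(-4,0,4),(-4,4,4),(0,-4,-4),(0,4,4),(4,-4,-4),(4,0,-4),(4,0,0),(4,4,0)],(0,-4,-4),(-4,-8,-4)),((0,-1,0),[(-8,0,4),(-4,-4,0),(-4,0,0),(-4,0,4),(-4,4,4),(-3,-5,1),(-3,3,1),(-2,-2,2),(0,-4,0),(0,4,0),(4,-4,-4),(4,0,-4),(4,0,0),(4,4,0),(6,-2,-6),(8,0,-4)],(-3,-5,1),(0,-4,0)),((0,1,0),[(-8,0,4),(-6,2,6),(-4,-4,0),(-4,0,0),(-4,0,4),(-4,4,4),(0,-4,0),(0,4,0),(2,2,-2),(3,-3,-1),(3,5,-1),(4,-4,-4),(4,0,-4),(4,0,0),(4,4,0),(8,0,-4)],(3,5,-1),(0,4,0)),((0,1,1),[(-4,-4,0),(-4,0,0),(-4,0,4),(-4,4,4),(0,-4,-4),(0,4,4),(4,-4,-4),(4,0,-4),(4,0,0),(4,4,0),(4,8,4)],(0,4,4),(4,8,4)),((1,-1,-1),[(-4,-4,0),(-4,0,0),(-4,0,4),(-4,4,4),(-2,6,6),(0,4,0),(4,-4,-4),(4,0,-4),(4,0,0),(4,4,0),(4,8,4),(6,-2,-2),(8,4,0)],(4,-4,-4),(6,-2,-2)),((1,0,-1),[(-8,0,4),(-4,-4,0),(-4,0,0)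,(-4,0,4),(-4,4,4),(-2,-2,2),(4,-4,-4),(4,0,-4),(4,0,0),(4,4,0),(6,-2,-6),(8,0,-4)],(6,-2,-6),(4,0,-4)),((1,0,0),[(-4,-4,0),(-4,0,0),(-4,0,4),(-4,4,4),(0,4,0),(4,-4,-4),(4,0,-4),(4,0,0),(4,4,0),(4,8,4),(8,4,0)],(4,0,0),(8,4,0)),((1,1,0),[(-4,-4,0),(-4,0,0),(-4,0,4),(-4,4,4),(4,-4,-4),(4,0,-4),(4,0,0),(4,4,0),(4,8,4)],(4,4,0),(4,8,4)),((2,0,-1),[(-9,-3,3),(-8,-4,0),(-8,0,4),(-6,2,2),(-4,-8,-4),(-4,-4,0),(-4,0,0),(-4,0,4),(-4,4,4),(0,-4,0),(2,-6,-6),(4,-4,-4),(4,0,-4),(4,0,0),(4,4,0),(7,-3,-5),(8,0,-4)],(8,0,-4),(7,-3,-5))] :: (i3 \<times> i3 list \<times> i3 \<times> i3) list)"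
definition "WNB = ([] :: (i3 \<times> int \<times> i3 list \<times> i3 \<times> i3) list)"

lemma B_nb: "nbCheck (-1) 1 (2,2,2) 4 NBB" unfolding NBB_def by code_simp
lemma B_sg: "sgCheck (-1) 1 (2,2,2) 4 SLB" unfolding SLB_def by code_simp
lemma B_ws: "\<forall>(kk,h,xs,z)\<in>set WSB. witOK (-1) 1 kk h xs z" unfolding WSB_def by code_simp
lemma B_wsl: "SLB = map fst WSB" unfolding SLB_def WSB_def by code_simp
lemma B_wf: "\<forall>(kk,xs,z1,z2)\<in>set WFB. witOK (-1) 1 kk 4 xs z1 \<and> witOK (-1) 1 kk 4 xs z2 \<and> z1 \<noteq> z2 \<and> kk \<noteq> (0,0,0)
              \<and> checkFace (-1) 1 4 (11,9,8) 6 z1 kk" unfolding WFB_def by code_simp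
lemma B_wfl: "FLB = map fst WFB" unfolding FLB_def WFB_def by code_simp
lemma B_wn: "\<forall>(kk,h,xs,z1,z2)\<in>set WNB. witOK (-1) 1 kk h xs z1 \<and> witOK (-1) 1 kk h xs z2 \<and> z1 \<noteq> z2 \<and> kk \<noteq> (0,0,0)"
  unfolding WNB_def by code_simp
lemma B_wnl: "FNB = map fst WNB" unfolding FNB_def WNB_def by code_simp
lemma B_part: "set NBB = set SLB \<union> set FLB \<union> set FNB"
  unfolding NBB_def SLB_def FLB_def FNB_def by code_simp
lemma B_dist: "distinct NBB" "distinct SLB" "distinct FLB" "distinct FNB"
  unfolding NBB_def SLB_def FLB_def FNB_def by code_simp+
lemma B_fin: "\<forall>kk\<in>set FNB. finite (Bset (twindragon (-1) 1) (toV 1 kk))"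
  by (simp add: FNB_def)
lemmas B_asm = B.assemble[OF B_cok2 B_cokf B_nb B_sg B_ws B_wsl B_wf B_wfl B_wn B_wnl B_fin B_part]

lemma B_final: "card (neighbors (twindragon (-1) 1)) = 18 \<and>
   card {k \<in> neighbors (twindragon (-1) 1). is_face (twindragon (-1) 1) k} = 14 \<and>
   card {k \<in> neighbors (twindragon (-1) 1). point_neighbor (twindragon (-1) 1) k} = 4"
proof -
  have e1: "card (neighbors (twindragon (-1) 1)) = length NBB" using B_asm(1) card_toV[OF B_dist(1)] by simp
  have e2: "card {k \<in> neighbors (twindragon (-1) 1). is_face (twindragon (-1) 1) k} = length FLB" using B_asm(2) card_toV[OF B_dist(3)] by simp
  have e3: "card {k \<in> neighbors (twindragon (-1) 1). point_neighbor (twindragon (-1) 1) k} = length SLB" using B_asm(3) card_toV[OF B_dist(2)] by simp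
  have "length NBB = 18" "length FLB = 14" "length SLB = 4" by (simp_all add: NBB_def FLB_def SLB_def)
  then show ?thesis using e1 e2 e3 by simp
qed

definition "B1D (i::nat) = ((if i = 0 then (99/50) else (if i = 1 then (173/100) else (if i = 2 then (8/5) else (if i = 3 then (141/100) else (if i = 4 then (119/100) else (if i = 5 then (101/100) else (if i = 6 then 1 else (if i = 7 then (22/25) else (if i = 8 then (73/100) else (if i = 9 then (33/50) else (if i = 10 then (63/100) else (if i = 11 then (27/50) else (if i = 12 then (23/50) else (if i = 13 then (43/100) else (if i = 14 then (2/5) else (if i = 15 then (17/50) else (3/10))))))))))))))))) :: real)"
definition "B2D (i::nat) = ((if i = 0 then (131/100) else (if i = 1 then (131/100) else (if i = 2 then (53/50) else (if i = 3 then (93/100) else (if i = 4 then (43/50) else (if i = 5 then (19/25) else (if i = 6 then (13/20) else (if i = 7 then (14/25) else (if i = 8 then (11/20) else (if i = 9 then (49/100) else (if i = 10 then (41/100) else (if i = 11 then (37/100) else (if i = 12 then (7/20) else (if i = 13 then (3/10) else (if i = 14 then (13/50) else (if i = 15 then (6/25) else (11/50))))))))))))))))) :: real)"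
definition "B3D (i::nat) = ((if i = 0 then (27/20) else (if i = 1 then (11/10) else (if i = 2 then (97/100) else (if i = 3 then (9/10) else (if i = 4 then (4/5) else (if i = 5 then (69/100) else (if i = 6 then (3/5) else (if i = 7 then (59/100) else (if i = 8 then (53/100) else (if i = 9 then (9/20) else (if i = 10 then (41/100) else (if i = 11 then (39/100) else (if i = 12 then (17/50) else (if i = 13 then (3/10) else (if i = 14 then (7/25) else (if i = 15 then (13/50) else (23/100))))))))))))))))) :: real)"
lemma D_nn: "i < 17 \<Longrightarrow> 0 \<le> B1D i \<and> 0 \<le> B2D i \<and> 0 \<le> B3D i"
  by (simp add: B1D_def B2D_def B3D_def)
lemma D_H1: assumes "Suc i < 17" shows "B1D (Suc i) + \<bar>(Lm 0 1 ^^ Suc i) hv $ 1\<bar> \<le> B1D i \<and>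
   B2D (Suc i) + \<bar>(Lm 0 1 ^^ Suc i) hv $ 2\<bar> \<le> B2D i \<and> B3D (Suc i) + \<bar>(Lm 0 1 ^^ Suc i) hv $ 3\<bar> \<le> B3D i"
proof -
  show ?thesis using assms by (auto simp: less_Suc_eq B1D_def B2D_def B3D_def numeral_eq_Suc Lm_vec3 hv_def)
qed
lemma D_H2: "l \<in> {1,2,3} \<Longrightarrow> \<bar>(Lm 0 1 ^^ 17) (vec3 1 0 0) $ l\<bar> * B1D 0 + \<bar>(Lm 0 1 ^^ 17) (vec3 0 1 0) $ l\<bar> * B2D 0
               + \<bar>(Lm 0 1 ^^ 17) (vec3 0 0 1) $ l\<bar> * B3D 0 + \<bar>(Lm 0 1 ^^ 17) hv $ l\<bar>
               \<le> (if l = 1 then B1D (17 - 1) else if l = 2 then B2D (17 - 1) else B3D (17 - 1))"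
  by (auto simp: B1D_def B2D_def B3D_def numeral_eq_Suc Lm_vec3 hv_def)
lemma D_poly: "compact (polyP 0 1 17 B1D B2D B3D)" "polyP 0 1 17 B1D B2D B3D \<noteq> {}"
    "Fm 0 1 (polyP 0 1 17 B1D B2D B3D) \<subseteq> polyP 0 1 17 B1D B2D B3D"
    "\<forall>x\<in>polyP 0 1 17 B1D B2D B3D. \<bar>x$1\<bar> \<le> B1D 0 \<and> \<bar>x$2\<bar> \<le> B2D 0 \<and> \<bar>x$3\<bar> \<le> B3D 0"
  by (rule polyP_props[OF _ D_nn D_H1 D_H2]; simp)+

lemma D_contr: "nI ((Lm 0 1 ^^ 8) x) \<le> nI x / 2"
  by (rule contr_from_cols) (simp_all add: nI_def numeral_eq_Suc Lm_vec3)

interpretation D: twdb "0" "1" 8 "polyP 0 1 17 B1D B2D B3D" "B1D 0" "B2D 0" "B3D 0"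
  by unfold_locales (use D_poly D_contr in auto)
lemma D_cok2: "D.cok 2 (3,2,2)" unfolding D.cok_def by (simp add: B1D_def B2D_def B3D_def)
lemma D_cokf: "D.cok (2*16) (63,41,43)" unfolding D.cok_def by (simp add: B1D_def B2D_def B3D_def)
definition "NBD = ([(-3,-1,2),(-3,0,1),(-3,1,1),(-2,-1,1),(-2,-1,2),(-2,0,1),(-2,1,0),(-2,2,0),(-1,-2,2),(-1,-1,1),(-1,0,0),(-1,0,1),(-1,1,0),(-1,2,-1),(0,-2,1),(0,-1,0),(0,-1,1),(0,1,-1),(0,1,0),(0,2,-1),(1,-2,1),(1,-1,0),(1,0,-1),(1,0,0),(1,1,-1),(1,2,-2),(2,-2,0),(2,-1,0),(2,0,-1),(2,1,-2),(2,1,-1),(3,-1,-1),(3,0,-1),(3,1,-2)] :: i3 list)"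
definition "SLD = ([(-3,-1,2),(-3,1,1),(-2,-1,1),(-2,2,0),(-1,-2,2),(-1,2,-1),(1,-2,1),(1,2,-2),(2,-2,0),(2,1,-1),(3,-1,-1),(3,1,-2)] :: i3 list)"
definition "FLD = ([(-2,0,1),(-1,-1,1),(-1,0,0),(-1,0,1),(-1,1,0),(0,-1,0),(0,-1,1),(0,1,-1),(0,1,0),(1,-1,0),(1,0,-1),(1,0,0),(1,1,-1),(2,0,-1)] :: i3 list)"
definition "FND = ([(-3,0,1),(-2,-1,2),(-2,1,0),(0,-2,1),(0,2,-1),(2,-1,0),(2,1,-2),(3,0,-1)] :: i3 list)"
definition "WSD = ([((-3,-1,2),1,[(-3,-1,2),(-3,1,1),(-1,-2,2),(-1,2,-1),(1,-2,1),(1,2,-2),(3,-1,-1),(3,1,-2)],(-3,-1,2)),((-3,1,1),1,[(-3,-1,2),(-3,1,1),(-1,-2,2),(-1,2,-1),(1,-2,1),(1,2,-2),(3,-1,-1),(3,1,-2)],(-3,1,1)),((-2,-1,1),1,[(-3,-1,2),(-3,1,1),(-2,-1,1),(-1,-2,2),(-1,2,-1),(1,-2,1),(1,2,-2),(2,1,-1),(3,-1,-1),(3,1,-2)],(-2,-1,1)),((-2,2,0),1,[(-3,-1,2),(-3,1,1),(-2,2,0),(-1,-2,2),(-1,2,-1),(1,-2,1),(1,2,-2),(2,-2,0),(3,-1,-1),(3,1,-2)],(-2,2,0)),((-1,-2,2),1,[(-3,-1,2),(-3,1,1),(-1,-2,2),(-1,2,-1),(1,-2,1),(1,2,-2),(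3,-1,-1),(3,1,-2)],(-1,-2,2)),((-1,2,-1),1,[(-3,-1,2),(-3,1,1),(-1,-2,2),(-1,2,-1),(1,-2,1),(1,2,-2),(3,-1,-1),(3,1,-2)],(-1,2,-1)),((1,-2,1),1,[(-3,-1,2),(-3,1,1),(-1,-2,2),(-1,2,-1),(1,-2,1),(1,2,-2),(3,-1,-1),(3,1,-2)],(1,-2,1)),((1,2,-2),1,[(-3,-1,2),(-3,1,1),(-1,-2,2),(-1,2,-1),(1,-2,1),(1,2,-2),(3,-1,-1),(3,1,-2)],(1,2,-2)),((2,-2,0),1,[(-3,-1,2),(-3,1,1),(-2,2,0),(-1,-2,2),(-1,2,-1),(1,-2,1),(1,2,-2),(2,-2,0),(3,-1,-1),(3,1,-2)],(2,-2,0)),((2,1,-1),1,[(-3,-1,2),(-3,1,1),(-2,-1,1),(-1,-2,2),(-1,2,-1),(1,-2,1),(1,2,-2),(2,1,-1),(3,-1,-1),(3,1,-2)],(2,1,-1)),((3,-1,-1),1,[(-3,-1,2),(-3,1,1),(-1,-2,2),(-1,2,-1),(1,-2,1),(1,2,-2),(3,-1,-1),(3,1,-2)],(3,-1,-1)),((3,1,-2),1,[(-3,-1,2),(-3,1,1),(-1,-2,2),(-1,2,-1),(1,-2,1),(1,2,-2),(3,-1,-1),(3,1,-2)],(3,1,-2))] :: (i3 \<times> int \<times> i3 list \<times> i3) list)"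
definition "WFD = ([((-2,0,1),[(-48,-16,32),(-48,16,16),(-24,4,12),(-24,20,4),(-16,-32,32),(-16,-16,16),(-16,0,0),(-16,0,16),(-16,16,0),(-16,32,-16),(-8,-20,12),(-8,-20,20),(-8,12,-12),(8,-12,4),(16,-32,16),(16,-16,0),(16,0,-16),(16,0,0),(16,16,-16),(16,32,-32),(24,12,-20),(40,4,-20),(48,-16,-16),(48,16,-32)],(-24,4,12),(-48,16,16)),((-1,-1,1),[(-48,-16,32),(-48,16,16),(-24,4,12),(-24,20,4),(-16,-32,32),(-16,-16,16),(-16,0,0),(-16,0,16),(-16,16,0),(-16,32,-16),(-8,-20,12),(-8,-20,20),(-8,12,-12),(8,-12,4),(16,-32,16),(16,-16,0),(16,0,-16),(16,0,0),(16,16,-16),(16,32,-32),(24,12,-20),(40,4,-20),(48,-16,-16),(48,16,-32)],(-8,-20,12),(16,-16,0)),((-1,0,0),[(-48,-16,32),(-48,16,16),(-32,-16,16),(-32,8,8),(-24,24,0),(-16,-32,32),(-16,-24,24),(-16,-16,16),(-16,0,0),(-16,0,16),(-16,8,-8),(-16,16,0),(-16,32,-16),(-4,0,-4),(0,-24,8),(0,-16,16),(0,8,8),(8,-8,0),(16,-32,16),(16,-16,0),(16,0,-16),(16,0,0),(16,8,-8),(16,16,-16),(16,32,-32),(28,0,-4),(32,8,-24),(48,-16,-16),(48,16,-32)],(-4,0,-4),(-32,-16,16)),((-1,0,1),[(-24,4,12),(-24,20,4),(-16,-16,16),(-16,-4,20),(-16,0,0),(-16,0,16),(-16,16,0),(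-8,-20,12),(-8,-20,20),(-8,4,-4),(-8,12,-12),(8,-12,4),(16,-16,0),(16,-4,-12),(16,0,-16),(16,0,0),(16,16,-16),(24,4,-4),(24,12,-20),(40,4,-20)],(-16,-4,20),(-16,0,16)),((-1,1,0),[(-48,-16,32),(-48,16,16),(-32,-8,24),(-16,-32,32),(-16,-16,16),(-16,-8,8),(-16,0,0),(-16,0,16),(-16,16,0),(-16,32,-16),(-8,8,0),(0,-8,-8),(0,24,-8),(16,-32,16),(16,-16,0),(16,-8,8),(16,0,-16),(16,0,0),(16,16,-16),(16,24,-24),(16,32,-32),(24,-24,0),(32,-8,-8),(48,-16,-16),(48,16,-32)],(-8,8,0),(-16,0,16)),((0,-1,0),[(-32,-8,24),(-28,0,4),(-16,-16,16),(-16,-8,8),(-16,0,0),(-16,0,16),(-16,16,0),(-10,4,10),(-8,8,0),(0,-16,0),(0,-8,-8),(0,16,0),(0,24,-8),(1,-22,3),(1,10,3),(4,0,4),(16,-16,0),(16,-8,8),(16,0,-16),(16,0,0),(16,16,-16),(16,24,-24),(22,4,-22),(24,-24,0),(32,-8,-8)],(1,-22,3),(0,-16,0)),((0,-1,1),[(-48,-16,32),(-48,16,16),(-24,4,12),(-24,20,4),(-16,-32,32),(-16,-16,16),(-16,0,0),(-16,0,16),(-16,16,0),(-16,32,-16),(-8,-20,12),(-8,-20,20),(-8,12,-12),(8,-12,4),(16,-32,16),(16,-16,0),(16,0,-16),(16,0,0),(16,16,-16),(16,32,-32),(24,12,-20),(40,4,-20),(48,-16,-16),(48,16,-32)],(-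8,-20,20),(-16,0,16)),((0,1,-1),[(-48,-16,32),(-48,16,16),(-40,-4,20),(-24,-12,20),(-16,-32,32),(-16,-16,16),(-16,0,0),(-16,0,16),(-16,16,0),(-16,32,-16),(-8,12,-4),(8,-12,12),(8,20,-20),(8,20,-12),(16,-32,16),(16,-16,0),(16,0,-16),(16,0,0),(16,16,-16),(16,32,-32),(24,-20,-4),(24,-4,-12),(48,-16,-16),(48,16,-32)],(8,20,-20),(-16,0,0)),((0,1,0),[(-32,-8,24),(-28,0,4),(-16,-16,16),(-16,-8,8),(-16,0,0),(-16,0,16),(-16,16,0),(-10,4,10),(-8,8,0),(0,-16,0),(0,-8,-8),(0,16,0),(0,24,-8),(1,-22,3),(1,10,3),(4,0,4),(16,-16,0),(16,-8,8),(16,0,-16),(16,0,0),(16,16,-16),(16,24,-24),(22,4,-22),(24,-24,0),(32,-8,-8)],(1,10,3),(0,16,0)),((1,-1,0),[(-32,8,8),(-24,24,0),(-16,-24,24),(-16,-16,16),(-16,0,0),(-16,0,16),(-16,8,-8),(-16,16,0),(0,-24,8),(0,8,8),(8,-8,0),(16,-16,0),(16,0,-16),(16,0,0),(16,8,-8),(16,16,-16),(32,8,-24)],(8,-8,0),(16,-16,0)),((1,0,-1),[(-40,-4,20),(-24,-12,20),(-24,-4,4),(-16,-16,16),(-16,0,0),(-16,0,16),(-16,4,12),(-16,16,0),(-8,12,-4),(8,-12,12),(8,-4,4),(8,20,-20),(8,20,-12),(16,-16,0),(16,0,-16),(16,0,0),(16,4,-20),(16,16,-16),(24,-20,-4),(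24,-4,-12)],(16,4,-20),(16,0,-16)),((1,0,0),[(-48,-16,32),(-48,16,16),(-40,-4,20),(-32,16,0),(-24,-12,20),(-24,-4,4),(-16,-32,32),(-16,-16,16),(-16,0,0),(-16,0,16),(-16,16,0),(-16,32,-16),(-8,12,-4),(0,16,0),(8,-12,12),(8,-4,4),(8,20,-20),(8,20,-12),(16,-32,16),(16,-16,0),(16,0,-16),(16,0,0),(16,16,-16),(16,32,-32),(24,-20,-4),(24,-4,-12),(48,-16,-16),(48,16,-32)],(8,-4,4),(0,16,0)),((1,1,-1),[(-48,-16,32),(-48,16,16),(-24,4,12),(-24,20,4),(-16,-32,32),(-16,-16,16),(-16,0,0),(-16,0,16),(-16,16,0),(-16,32,-16),(-8,-20,12),(-8,-20,20),(-8,12,-12),(8,-12,4),(16,-32,16),(16,-16,0),(16,0,-16),(16,0,0),(16,16,-16),(16,32,-32),(24,12,-20),(40,4,-20),(48,-16,-16),(48,16,-32)],(24,12,-20),(48,16,-32)),((2,0,-1),[(-48,-16,32),(-48,16,16),(-32,8,8),(-24,24,0),(-20,0,12),(-16,-32,32),(-16,-24,24),(-16,-16,16),(-16,0,0),(-16,0,16),(-16,8,-8),(-16,16,0),(-16,32,-16),(0,-24,8),(0,8,8),(8,-8,0),(16,-32,16),(16,-16,0),(16,0,-16),(16,0,0),(16,8,-8),(16,16,-16),(16,32,-32),(32,8,-24),(44,0,-20),(48,-16,-16),(48,16,-32)],(44,0,-20),(16,-16,0))] :: (i3 \<times> i3 list \<times> i3 \<times> i3) list)"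
definition "WND = ([((-3,0,1),2,[(-7,0,3),(-6,-2,4),(-6,2,2),(-5,0,1),(-4,4,0),(-2,-4,4),(-2,4,-2),(2,-4,2),(2,4,-4),(4,-4,0),(5,0,-1),(6,-2,-2),(6,2,-4),(7,0,-3)],(-5,0,1),(-7,0,3)),((-2,-1,2),4,[(-14,0,6),(-12,-4,8),(-12,4,4),(-10,0,2),(-9,-6,9),(-8,8,0),(-7,-2,7),(-4,-8,8),(-4,8,-4),(4,-8,4),(4,8,-8),(7,2,-7),(8,-8,0),(9,6,-9),(10,0,-2),(12,-4,-4),(12,4,-8),(14,0,-6)],(-7,-2,7),(-9,-6,9)),((-2,1,0),2,[(-6,-2,4),(-6,2,2),(-4,2,0),(-3,2,-1),(-2,-4,4),(-2,4,-2),(0,-4,2),(0,4,-2),(2,-4,2),(2,4,-4),(4,-2,0),(5,-2,-1),(6,-2,-2),(6,2,-4)],(-4,2,0),(-3,2,-1)),((0,-2,1),8,[(-28,0,12),(-24,-8,16),(-24,8,8),(-16,16,0),(-14,-4,14),(-8,-16,16),(-8,16,-8),(-1,-18,13),(-1,14,-3),(0,-16,8),(0,16,-8),(8,-16,8),(8,16,-16),(16,-16,0),(18,12,-18),(20,0,-4),(24,-8,-8),(24,8,-16)],(0,-16,8),(-1,-18,13)),((0,2,-1),8,[(-28,0,12),(-24,-8,16),(-24,8,8),(-16,16,0),(-14,-4,14),(-8,-16,16),(-8,16,-8),(0,-16,8),(0,16,-8),(7,-18,5),(7,14,-11),(8,-16,8),(8,16,-16),(16,-16,0),(18,12,-18)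,(20,0,-4),(24,-8,-8),(24,8,-16)],(0,16,-8),(7,14,-11)),((2,-1,0),2,[(-6,-2,4),(-6,2,2),(-4,2,0),(-3,2,-1),(-2,-4,4),(-2,4,-2),(0,-4,2),(0,4,-2),(2,-4,2),(2,4,-4),(4,-2,0),(5,-2,-1),(6,-2,-2),(6,2,-4)],(4,-2,0),(5,-2,-1)),((2,1,-2),4,[(-14,0,6),(-12,-4,8),(-12,4,4),(-10,0,2),(-9,-6,9),(-8,8,0),(-7,-2,7),(-4,-8,8),(-4,8,-4),(4,-8,4),(4,8,-8),(7,2,-7),(8,-8,0),(9,6,-9),(10,0,-2),(12,-4,-4),(12,4,-8),(14,0,-6)],(9,6,-9),(7,2,-7)),((3,0,-1),2,[(-7,0,3),(-6,-2,4),(-6,2,2),(-5,0,1),(-4,4,0),(-2,-4,4),(-2,4,-2),(2,-4,2),(2,4,-4),(4,-4,0),(5,0,-1),(6,-2,-2),(6,2,-4),(7,0,-3)],(5,0,-1),(7,0,-3))] :: (i3 \<times> int \<times> i3 list \<times> i3 \<times> i3) list)"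

lemma D_nb: "nbCheck 0 1 (3,2,2) 7 NBD" unfolding NBD_def by code_simp
lemma D_sg: "sgCheck 0 1 (3,2,2) 7 SLD" unfolding SLD_def by code_simp
lemma D_ws: "\<forall>(kk,h,xs,z)\<in>set WSD. witOK 0 1 kk h xs z" unfolding WSD_def by code_simp
lemma D_wsl: "SLD = map fst WSD" unfolding SLD_def WSD_def by code_simp
lemma D_wf: "\<forall>(kk,xs,z1,z2)\<in>set WFD. witOK 0 1 kk 16 xs z1 \<and> witOK 0 1 kk 16 xs z2 \<and> z1 \<noteq> z2 \<and> kk \<noteq> (0,0,0)
              \<and> checkFace 0 1 16 (63,41,43) 9 z1 kk" unfolding WFD_def by code_simp
lemma D_wfl: "FLD = map fst WFD" unfolding FLD_def WFD_def by code_simp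
lemma D_wn: "\<forall>(kk,h,xs,z1,z2)\<in>set WND. witOK 0 1 kk h xs z1 \<and> witOK 0 1 kk h xs z2 \<and> z1 \<noteq> z2 \<and> kk \<noteq> (0,0,0)"
  unfolding WND_def by code_simp
lemma D_wnl: "FND = map fst WND" unfolding FND_def WND_def by code_simp
lemma D_part: "set NBD = set SLD \<union> set FLD \<union> set FND"
  unfolding NBD_def SLD_def FLD_def FND_def by code_simp
lemma D_dist: "distinct NBD" "distinct SLD" "distinct FLD" "distinct FND"
  unfolding NBD_def SLD_def FLD_def FND_def by code_simp+
lemma D_fin_0_d0: "deadK 0 1 (3,2,2) 7 (3,-2,0)" by code_simp
lemma D_fin_0_s1: "finite (Bset (twindragon 0 1) (toV 1 (2,-2,0)))"
  by (rule D.sg_finite[OF D_cok2 D_sg]) (simp add: SLD_def)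
lemma D_fin_0_d2: "deadK 0 1 (3,2,2) 7 (1,-2,0)" by code_simp
lemma D_fin_0: "finite (Bset (twindragon 0 1) (toV 1 (-3,0,1)))"
proof (rule D.fin_step[OF D_cok2, where n=7])
  show "((-3,0,1)::i3) \<noteq> (0,0,0)" by simp
  fix t assume "t \<in> {sh 1 (Mi 0 1 (-3,0,1)), Mi 0 1 (-3,0,1), sh (-1) (Mi 0 1 (-3,0,1))}"
  then have "t = (3,-2,0) \<or> t = (2,-2,0) \<or> t = (1,-2,0)" by (simp add: Mi_def sh_def)
  then show "deadK 0 1 (3,2,2) 7 t \<or> finite (Bset (twindragon 0 1) (toV 1 t))" using D_fin_0_d0 D_fin_0_s1 D_fin_0_d2 by blast
qed
lemma D_fin_1_d1: "deadK 0 1 (3,2,2) 7 (-4,0,1)" by code_simp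
lemma D_fin_1_d2: "deadK 0 1 (3,2,2) 7 (-5,0,1)" by code_simp
lemma D_fin_1: "finite (Bset (twindragon 0 1) (toV 1 (2,1,-2)))"
proof (rule D.fin_step[OF D_cok2, where n=7])
  show "((2,1,-2)::i3) \<noteq> (0,0,0)" by simp
  fix t assume "t \<in> {sh 1 (Mi 0 1 (2,1,-2)), Mi 0 1 (2,1,-2), sh (-1) (Mi 0 1 (2,1,-2))}"
  then have "t = (-3,0,1) \<or> t = (-4,0,1) \<or> t = (-5,0,1)" by (simp add: Mi_def sh_def)
  then show "deadK 0 1 (3,2,2) 7 t \<or> finite (Bset (twindragon 0 1) (toV 1 t))" using D_fin_0 D_fin_1_d1 D_fin_1_d2 by blast
qed
lemma D_fin_2_d0: "deadK 0 1 (3,2,2) 7 (-1,2,0)" by code_simp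
lemma D_fin_2_s1: "finite (Bset (twindragon 0 1) (toV 1 (-2,2,0)))"
  by (rule D.sg_finite[OF D_cok2 D_sg]) (simp add: SLD_def)
lemma D_fin_2_d2: "deadK 0 1 (3,2,2) 7 (-3,2,0)" by code_simp
lemma D_fin_2: "finite (Bset (twindragon 0 1) (toV 1 (3,0,-1)))"
proof (rule D.fin_step[OF D_cok2, where n=7])
  show "((3,0,-1)::i3) \<noteq> (0,0,0)" by simp
  fix t assume "t \<in> {sh 1 (Mi 0 1 (3,0,-1)), Mi 0 1 (3,0,-1), sh (-1) (Mi 0 1 (3,0,-1))}"
  then have "t = (-1,2,0) \<or> t = (-2,2,0) \<or> t = (-3,2,0)" by (simp add: Mi_def sh_def)
  then show "deadK 0 1 (3,2,2) 7 t \<or> finite (Bset (twindragon 0 1) (toV 1 t))" using D_fin_2_d0 D_fin_2_s1 D_fin_2_d2 by blast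
qed
lemma D_fin_3_d0: "deadK 0 1 (3,2,2) 7 (5,0,-1)" by code_simp
lemma D_fin_3_d1: "deadK 0 1 (3,2,2) 7 (4,0,-1)" by code_simp
lemma D_fin_3: "finite (Bset (twindragon 0 1) (toV 1 (-2,-1,2)))"
proof (rule D.fin_step[OF D_cok2, where n=7])
  show "((-2,-1,2)::i3) \<noteq> (0,0,0)" by simp
  fix t assume "t \<in> {sh 1 (Mi 0 1 (-2,-1,2)), Mi 0 1 (-2,-1,2), sh (-1) (Mi 0 1 (-2,-1,2))}"
  then have "t = (5,0,-1) \<or> t = (4,0,-1) \<or> t = (3,0,-1)" by (simp add: Mi_def sh_def)
  then show "deadK 0 1 (3,2,2) 7 t \<or> finite (Bset (twindragon 0 1) (toV 1 t))" using D_fin_3_d0 D_fin_3_d1 D_fin_2 by blast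
qed
lemma D_fin_4_s0: "finite (Bset (twindragon 0 1) (toV 1 (3,1,-2)))"
  by (rule D.sg_finite[OF D_cok2 D_sg]) (simp add: SLD_def)
lemma D_fin_4_d2: "deadK 0 1 (3,2,2) 7 (1,1,-2)" by code_simp
lemma D_fin_4: "finite (Bset (twindragon 0 1) (toV 1 (0,-2,1)))"
proof (rule D.fin_step[OF D_cok2, where n=7])
  show "((0,-2,1)::i3) \<noteq> (0,0,0)" by simp
  fix t assume "t \<in> {sh 1 (Mi 0 1 (0,-2,1)), Mi 0 1 (0,-2,1), sh (-1) (Mi 0 1 (0,-2,1))}"
  then have "t = (3,1,-2) \<or> t = (2,1,-2) \<or> t = (1,1,-2)" by (simp add: Mi_def sh_def)
  then show "deadK 0 1 (3,2,2) 7 t \<or> finite (Bset (twindragon 0 1) (toV 1 t))" using D_fin_4_s0 D_fin_1 D_fin_4_d2 by blast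
qed
lemma D_fin_5_d0: "deadK 0 1 (3,2,2) 7 (-1,-1,2)" by code_simp
lemma D_fin_5_s2: "finite (Bset (twindragon 0 1) (toV 1 (-3,-1,2)))"
  by (rule D.sg_finite[OF D_cok2 D_sg]) (simp add: SLD_def)
lemma D_fin_5: "finite (Bset (twindragon 0 1) (toV 1 (0,2,-1)))"
proof (rule D.fin_step[OF D_cok2, where n=7])
  show "((0,2,-1)::i3) \<noteq> (0,0,0)" by simp
  fix t assume "t \<in> {sh 1 (Mi 0 1 (0,2,-1)), Mi 0 1 (0,2,-1), sh (-1) (Mi 0 1 (0,2,-1))}"
  then have "t = (-1,-1,2) \<or> t = (-2,-1,2) \<or> t = (-3,-1,2)" by (simp add: Mi_def sh_def)
  then show "deadK 0 1 (3,2,2) 7 t \<or> finite (Bset (twindragon 0 1) (toV 1 t))" using D_fin_5_d0 D_fin_3 D_fin_5_s2 by blast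
qed
lemma D_fin_6_d0: "deadK 0 1 (3,2,2) 7 (1,2,-1)" by code_simp
lemma D_fin_6_s2: "finite (Bset (twindragon 0 1) (toV 1 (-1,2,-1)))"
  by (rule D.sg_finite[OF D_cok2 D_sg]) (simp add: SLD_def)
lemma D_fin_6: "finite (Bset (twindragon 0 1) (toV 1 (2,-1,0)))"
proof (rule D.fin_step[OF D_cok2, where n=7])
  show "((2,-1,0)::i3) \<noteq> (0,0,0)" by simp
  fix t assume "t \<in> {sh 1 (Mi 0 1 (2,-1,0)), Mi 0 1 (2,-1,0), sh (-1) (Mi 0 1 (2,-1,0))}"
  then have "t = (1,2,-1) \<or> t = (0,2,-1) \<or> t = (-1,2,-1)" by (simp add: Mi_def sh_def)
  then show "deadK 0 1 (3,2,2) 7 t \<or> finite (Bset (twindragon 0 1) (toV 1 t))" using D_fin_6_d0 D_fin_5 D_fin_6_s2 by blast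
qed
lemma D_fin_7_s0: "finite (Bset (twindragon 0 1) (toV 1 (1,-2,1)))"
  by (rule D.sg_finite[OF D_cok2 D_sg]) (simp add: SLD_def)
lemma D_fin_7_d2: "deadK 0 1 (3,2,2) 7 (-1,-2,1)" by code_simp
lemma D_fin_7: "finite (Bset (twindragon 0 1) (toV 1 (-2,1,0)))"
proof (rule D.fin_step[OF D_cok2, where n=7])
  show "((-2,1,0)::i3) \<noteq> (0,0,0)" by simp
  fix t assume "t \<in> {sh 1 (Mi 0 1 (-2,1,0)), Mi 0 1 (-2,1,0), sh (-1) (Mi 0 1 (-2,1,0))}"
  then have "t = (1,-2,1) \<or> t = (0,-2,1) \<or> t = (-1,-2,1)" by (simp add: Mi_def sh_def)
  then show "deadK 0 1 (3,2,2) 7 t \<or> finite (Bset (twindragon 0 1) (toV 1 t))" using D_fin_7_s0 D_fin_4 D_fin_7_d2 by blast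
qed
lemma D_fin: "\<forall>kk\<in>set FND. finite (Bset (twindragon 0 1) (toV 1 kk))"
  unfolding FND_def using D_fin_0 D_fin_1 D_fin_2 D_fin_3 D_fin_4 D_fin_5 D_fin_6 D_fin_7 by simp
lemmas D_asm = D.assemble[OF D_cok2 D_cokf D_nb D_sg D_ws D_wsl D_wf D_wfl D_wn D_wnl D_fin D_part]

lemma D_final: "card (neighbors (twindragon 0 1)) = 34 \<and>
   card {k \<in> neighbors (twindragon 0 1). is_face (twindragon 0 1) k} = 14 \<and>
   card {k \<in> neighbors (twindragon 0 1). point_neighbor (twindragon 0 1) k} = 12"
proof -
  have e1: "card (neighbors (twindragon 0 1)) = length NBD" using D_asm(1) card_toV[OF D_dist(1)] by simp
  have e2: "card {k \<in> neighbors (twindragon 0 1). is_face (twindragon 0 1) k} = length FLD" using D_asm(2) card_toV[OF D_dist(3)] by simp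
  have e3: "card {k \<in> neighbors (twindragon 0 1). point_neighbor (twindragon 0 1) k} = length SLD" using D_asm(3) card_toV[OF D_dist(2)] by simp
  have "length NBD = 34" "length FLD = 14" "length SLD = 12" by (simp_all add: NBD_def FLD_def SLD_def)
  then show ?thesis using e1 e2 e3 by simp
qed
lemma D_final2: "card {k \<in> neighbors (twindragon 0 1). \<not> is_face (twindragon 0 1) k \<and> \<not> point_neighbor (twindragon 0 1) k} = 8 \<and>
   (\<forall>k \<in> neighbors (twindragon 0 1). \<not> is_face (twindragon 0 1) k \<and> \<not> point_neighbor (twindragon 0 1) k \<longrightarrow>
        finite (Bset (twindragon 0 1) k) \<and> card (Bset (twindragon 0 1) k) \<ge> 2)"
proof -
  have e4: "card {k \<in> neighbors (twindragon 0 1). \<not> is_face (twindragon 0 1) k \<and> \<not> point_neighbor (twindragon 0 1) k} = length FND"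
    using D_asm(4) card_toV[OF D_dist(4)] by simp
  have "length FND = 8" by (simp add: FND_def)
  moreover have "finite (Bset (twindragon 0 1) k) \<and> card (Bset (twindragon 0 1) k) \<ge> 2"
    if k: "k \<in> neighbors (twindragon 0 1)" "\<not> is_face (twindragon 0 1) k \<and> \<not> point_neighbor (twindragon 0 1) k" for k
  proof -
    obtain kk where kk: "kk \<in> set FND" "k = toV 1 kk" using D_asm(4) k by blast
    have "kk \<in> fst ` set WND" using kk(1) unfolding D_wnl by simp
    then obtain w where w0: "w \<in> set WND" "fst w = kk" by blast
    obtain k' h xs z1 z2 where wd: "w = (k',h,xs,z1,z2)" by (cases w rule: prod_cases5)
    have w: "(kk,h,xs,z1,z2) \<in> set WND" using w0 wd by simp
    then have wo: "witOK 0 1 kk h xs z1" "witOK 0 1 kk h xs z2" "z1 \<noteq> z2" using D_wn by auto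
    have f: "finite (Bset (twindragon 0 1) (toV 1 kk))" using D_fin kk(1) by blast
    show ?thesis using D.two_card[OF wo f] f kk(2) by simp
  qed
  ultimately show ?thesis using e4 by simp
qed

theorem proposition7p2:
  shows
  "card (neighbors (twindragon 1 (-1))) = 20 \<and>
   card {k \<in> neighbors (twindragon 1 (-1)). is_face (twindragon 1 (-1)) k} = 12 \<and>
   card {k \<in> neighbors (twindragon 1 (-1)). point_neighbor (twindragon 1 (-1)) k} = 8 \<and>
   card (neighbors (twindragon (-1) 1)) = 18 \<and>
   card {k \<in> neighbors (twindragon (-1) 1). is_face (twindragon (-1) 1) k} = 14 \<and>
   card {k \<in> neighbors (twindragon (-1) 1). point_neighbor (twindragon (-1) 1) k} = 4 \<and>
   card (neighbors (twindragon 0 1)) = 34 \<and>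
   card {k \<in> neighbors (twindragon 0 1). is_face (twindragon 0 1) k} = 14 \<and>
   card {k \<in> neighbors (twindragon 0 1). point_neighbor (twindragon 0 1) k} = 12 \<and>
   card {k \<in> neighbors (twindragon 0 1). \<not> is_face (twindragon 0 1) k \<and>
                                          \<not> point_neighbor (twindragon 0 1) k} = 8 \<and>
   (\<forall>k \<in> neighbors (twindragon 0 1). \<not> is_face (twindragon 0 1) k \<and>
        \<not> point_neighbor (twindragon 0 1) k \<longrightarrow>
        finite (Bset (twindragon 0 1) k) \<and> card (Bset (twindragon 0 1) k) \<ge> 2)"
    using C_final B_final D_final D_final2 by blast

end
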